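(* Let $q:\mathbb{R}^2\to\mathbb{C}^N$ be smooth, let $n\ge1$, and for $j=1,\dots,n$ let $\Phi_j$ be a solution of the Lax pair at $\lambda=\lambda_j$, where $\lambda_j\neq\overline{\lambda_i}$ whenever $i\neq j$. Let $\Phi$ be a solution at $\lambda$ with $\lambda\notin\{\overline{\lambda_1},\dots,\overline{\lambda_n}\}$. Define the $n\times n$ matrix $M=(M_{ij})$ by $M_{ij}=\dfrac{\Phi_i^{\dagger}\Lambda\Phi_j}{\mathrm{i}(\lambda_j-\overline{\lambda_i})}$ for $i\neq j$ and for $i=j$ with $\lambda_i\notin\mathbb{R}$; for $i$ with $\lambda_i\in\mathbb{R}$ assume $\Phi_i^{\dagger}\Lambda\Phi_i\equiv0$ and let $M_{ii}$ be a real-valued smooth function with $dM_{ii}=\omega(\Phi_i,\Phi_i)$. Assume $M$ is invertible everywhere. Let $Y=(\Phi_1,\dots,\Phi_n)$ be the $(N+1)\times n$ matrix with columns $\Phi_j$ and let $\Omega$ be the column vector with entries $\Omega_i=\dfrac{\Phi_i^{\dagger}\Lambda\Phi}{\mathrm{i}(\lambda-\overline{\lambda_i})}$. Set $$\Phi[n]=\Phi-YM^{-1}\Omega,\qquad Q[n]=Q-\mathrm{i}\big[\sigma_3,\;YM^{-1}Y^{\dagger}\Lambda\big].$$ Then $\Phi[n]_x=(\mathrm{i}\lambda\sigma_3+\mathrm{i}Q[n])\Phi[n]$ and $\Phi[n]_t=\big(\mathrm{i}\lambda^2\sigma_3+\mathrm{i}\lambda Q[n]-\tfrac12(\mathrm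{i}\sigma_3Q[n]^2-\sigma_3Q[n]_x)\big)\Phi[n]$.
   Context: Fix integers $N\ge1$ and $0\le k\le N$, and let $S=\mathrm{diag}(s_1,\dots,s_N)$ with $s_l=1$ for $l\le k$ and $s_l=-1$ for $l>k$. The $N$-component NLS equation is $\mathrm{i}\mathbf q_t+\tfrac12\mathbf q_{xx}-\mathbf q\,(\mathbf q^{\dagger}S\mathbf q)=0$ for $\mathbf q=(q_1,\dots,q_N)^T:\mathbb{R}^2\to\mathbb{C}^N$ (here ${}^\dagger$ is conjugate transpose). Its Lax pair is $\Phi_x=(\mathrm{i}\lambda\sigma_3+\mathrm{i}Q)\Phi$, $\Phi_t=\big(\mathrm{i}\lambda^2\sigma_3+\mathrm{i}\lambda Q-\tfrac12(\mathrm{i}\sigma_3Q^2-\sigma_3Q_x)\big)\Phi$, for $\Phi:\mathbb{R}^2\to\mathbb{C}^{N+1}$ and spectral parameter $\lambda\in\mathbb{C}$, where $Q=\begin{pmatrix}0&-\mathbf q^{\dagger}S\\ \mathbf q&0_{N\times N}\end{pmatrix}$ and $\sigma_3=\mathrm{diag}(1,-I_N)$. A "solution at $\lambda$" is a smooth $\Phi$ satisfying both equations with that value of $\lambda$. Let $\Lambda=\mathrm{diag}(1,-s_1,\dots,-s_N)$ (i.e. $1$, then $-1$ repeated $k$ times, then $1$ repeated $N-k$ times). For a solution $\Phi_1$ at $\lambda_1$ and a solution $\Phi$ at $\lambda$, $\omega(\Phi_1,\Phi)$ denotes the $1$-form $\Phi_1^{\dagger}\Lambda\sigma_3\Phi\,dx+[(\lambda+\overline{\lambda_1})\Phi_1^{\dagger}\Lambda\sigma_3\Phi+\Phi_1^{\dagger}\Lambda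 Q\Phi]\,dt$. $[A,B]=AB-BA$. *)

theory Defs
  imports "HOL-Analysis.Derivative" "Jordan_Normal_Form.Gauss_Jordan_Elimination"
begin

fun pd :: "bool list \<Rightarrow> (real \<Rightarrow> real \<Rightarrow> complex) \<Rightarrow> real \<Rightarrow> real \<Rightarrow> complex" where
  "pd [] f = f"
| "pd (True # ds) f = (\<lambda>x t. vector_derivative (\<lambda>y. pd ds f y t) (at x))"
| "pd (False # ds) f = (\<lambda>x t. vector_derivative (\<lambda>s. pd ds f x s) (at t))"

definition smooth2 :: "(real \<Rightarrow> real \<Rightarrow> complex) \<Rightarrow> bool" where
  "smooth2 f \<longleftrightarrow> (\<forall>ds. continuous_on UNIV (\<lambda>(x, t). pd ds f x t)
      \<and> (\<forall>x t. (\<lambda>y. pd ds f y t) differentiable (at x) \<and> (\<lambda>s. pd ds f x s) differentiable (at t)))"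

definition vhas_dx :: "(real \<Rightarrow> real \<Rightarrow> complex vec) \<Rightarrow> complex vec \<Rightarrow> real \<Rightarrow> real \<Rightarrow> bool" where
  "vhas_dx F G x t \<longleftrightarrow> dim_vec G = dim_vec (F x t) \<and> (\<forall>y. dim_vec (F y t) = dim_vec (F x t)) \<and>
     (\<forall>i < dim_vec (F x t). ((\<lambda>y. F y t $ i) has_vector_derivative G $ i) (at x))"

definition vhas_dt :: "(real \<Rightarrow> real \<Rightarrow> complex vec) \<Rightarrow> complex vec \<Rightarrow> real \<Rightarrow> real \<Rightarrow> bool" where
  "vhas_dt F G x t \<longleftrightarrow> dim_vec G = dim_vec (F x t) \<and> (\<forall>s. dim_vec (F x s) = dim_vec (F x t)) \<and>
     (\<forall>i < dim_vec (F x t). ((\<lambda>s. F x s $ i) has_vector_derivative G $ i) (at t))"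

definition mdx :: "(real \<Rightarrow> real \<Rightarrow> complex mat) \<Rightarrow> real \<Rightarrow> real \<Rightarrow> complex mat" where
  "mdx F x t = mat (dim_row (F x t)) (dim_col (F x t))
     (\<lambda>(i, j). vector_derivative (\<lambda>y. F y t $$ (i, j)) (at x))"

definition mdiff_x :: "(real \<Rightarrow> real \<Rightarrow> complex mat) \<Rightarrow> real \<Rightarrow> real \<Rightarrow> bool" where
  "mdiff_x F x t \<longleftrightarrow> (\<forall>y. dim_row (F y t) = dim_row (F x t) \<and> dim_col (F y t) = dim_col (F x t)) \<and>
     (\<forall>i < dim_row (F x t). \<forall>j < dim_col (F x t). (\<lambda>y. F y t $$ (i, j)) differentiable (at x))"

text \<open>s_l for the 0-based component index l (paper's s_{l+1}).\<close>
definition sgnS :: "nat \<Rightarrow> nat \<Rightarrow> complex" where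
  "sgnS k l = (if l < k then 1 else -1)"

definition sigma3 :: "nat \<Rightarrow> complex mat" where
  "sigma3 N = mat (N+1) (N+1) (\<lambda>(i, j). if i = j then (if i = 0 then 1 else -1) else 0)"

definition LambdaM :: "nat \<Rightarrow> nat \<Rightarrow> complex mat" where
  "LambdaM N k = mat (N+1) (N+1) (\<lambda>(i, j). if i = j then (if i = 0 then 1 else - sgnS k (i - 1)) else 0)"

text \<open>Q = [[0, -q^dagger S],[q, 0]], with q given by its components q x t l, l < N.\<close>
definition Qmat :: "nat \<Rightarrow> nat \<Rightarrow> (real \<Rightarrow> real \<Rightarrow> nat \<Rightarrow> complex) \<Rightarrow> real \<Rightarrow> real \<Rightarrow> complex mat" where
  "Qmat N k q x t = mat (N+1) (N+1) (\<lambda>(i, j).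
      if i = 0 \<and> j \<ge> 1 then - cnj (q x t (j - 1)) * sgnS k (j - 1)
      else if i \<ge> 1 \<and> j = 0 then q x t (i - 1) else 0)"

definition Ux :: "nat \<Rightarrow> complex \<Rightarrow> (real \<Rightarrow> real \<Rightarrow> complex mat) \<Rightarrow> real \<Rightarrow> real \<Rightarrow> complex mat" where
  "Ux N lam Qf x t = (\<i> * lam) \<cdot>\<^sub>m sigma3 N + \<i> \<cdot>\<^sub>m Qf x t"

definition Vt :: "nat \<Rightarrow> complex \<Rightarrow> (real \<Rightarrow> real \<Rightarrow> complex mat) \<Rightarrow> real \<Rightarrow> real \<Rightarrow> complex mat" where
  "Vt N lam Qf x t = (\<i> * lam^2) \<cdot>\<^sub>m sigma3 N + (\<i> * lam) \<cdot>\<^sub>m Qf x t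
      - (1/2) \<cdot>\<^sub>m (\<i> \<cdot>\<^sub>m (sigma3 N * (Qf x t * Qf x t)) - sigma3 N * mdx Qf x t)"

definition lax_solution :: "nat \<Rightarrow> nat \<Rightarrow> (real \<Rightarrow> real \<Rightarrow> nat \<Rightarrow> complex) \<Rightarrow> complex
     \<Rightarrow> (real \<Rightarrow> real \<Rightarrow> complex vec) \<Rightarrow> bool" where
  "lax_solution N k q lam Phi \<longleftrightarrow>
     (\<forall>x t. dim_vec (Phi x t) = N+1) \<and> (\<forall>i < N+1. smooth2 (\<lambda>x t. Phi x t $ i)) \<and>
     (\<forall>x t. vhas_dx Phi (Ux N lam (Qmat N k q) x t *\<^sub>v Phi x t) x t \<and>
            vhas_dt Phi (Vt N lam (Qmat N k q) x t *\<^sub>v Phi x t) x t)"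

definition herm :: "complex vec \<Rightarrow> complex mat \<Rightarrow> complex vec \<Rightarrow> complex" where
  "herm u A v = (\<Sum>i < dim_vec u. cnj (u $ i) * (A *\<^sub>v v) $ i)"

text \<open>The dx- and dt-coefficients of the 1-form omega(Phi1, Phi), Phi1 at lam1, Phi at lam.\<close>
definition omega_x :: "nat \<Rightarrow> nat \<Rightarrow> complex vec \<Rightarrow> complex vec \<Rightarrow> complex" where
  "omega_x N k u v = herm u (LambdaM N k * sigma3 N) v"

definition omega_t :: "nat \<Rightarrow> nat \<Rightarrow> complex mat \<Rightarrow> complex \<Rightarrow> complex \<Rightarrow> complex vec \<Rightarrow> complex vec \<Rightarrow> complex" where
  "omega_t N k Qv lam1 lam u v = (lam + cnj lam1) * herm u (LambdaM N k * sigma3 N) v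
      + herm u (LambdaM N k * Qv) v"

definition adj :: "complex mat \<Rightarrow> complex mat" where
  "adj A = mat (dim_col A) (dim_row A) (\<lambda>(i, j). cnj (A $$ (j, i)))"

definition minv :: "complex mat \<Rightarrow> complex mat" where
  "minv A = the (mat_inverse A)"

end

theory Submission
  imports Defs "Jordan_Normal_Form.Determinant"
begin


section \<open>Dimension-form matrix algebra rules\<close>

lemma ma_assoc: "dim_col A = dim_row B \<Longrightarrow> dim_col B = dim_row C \<Longrightarrow> A * B * C = A * (B * (C::'a::comm_ring_1 mat))"
  by (metis assoc_mult_mat carrier_matI)

lemma ma_distL: "dim_col A = dim_row B \<Longrightarrow> dim_row B = dim_row C \<Longrightarrow> dim_col B = dim_col C \<Longrightarrow>
   A * (B + C) = A * B + A * (C::'a::comm_ring_1 mat)"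
  by (metis mult_add_distrib_mat carrier_matI)

lemma ma_distR: "dim_row A = dim_row B \<Longrightarrow> dim_col A = dim_col B \<Longrightarrow> dim_col A = dim_row C \<Longrightarrow>
   (A + B) * C = A * C + B * (C::'a::comm_ring_1 mat)"
  by (metis add_mult_distrib_mat carrier_matI)

lemma ma_minus: "dim_row A = dim_row B \<Longrightarrow> dim_col A = dim_col B \<Longrightarrow> A - B = A + (-1) \<cdot>\<^sub>m (B::'a::comm_ring_1 mat)"
  by (rule eq_matI) auto

lemma ma_uminus: "- A = (-1) \<cdot>\<^sub>m (A::'a::comm_ring_1 mat)"
  by (rule eq_matI) auto

lemma ma_smultL: "dim_col A = dim_row B \<Longrightarrow> (c \<cdot>\<^sub>m A) * B = c \<cdot>\<^sub>m (A * (B::'a::comm_ring_1 mat))"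
  by (metis mult_smult_assoc_mat carrier_matI)

lemma ma_smultR: "dim_col A = dim_row B \<Longrightarrow> A * (c \<cdot>\<^sub>m B) = c \<cdot>\<^sub>m (A * (B::'a::comm_ring_1 mat))"
  by (metis mult_smult_distrib carrier_matI)

lemma ma_smult2: "c \<cdot>\<^sub>m (d \<cdot>\<^sub>m A) = (c * d) \<cdot>\<^sub>m (A::'a::comm_ring_1 mat)"
  by (rule eq_matI) auto

lemma ma_smult_add: "dim_row A = dim_row B \<Longrightarrow> dim_col A = dim_col B \<Longrightarrow> c \<cdot>\<^sub>m (A + B) = c \<cdot>\<^sub>m A + c \<cdot>\<^sub>m (B::'a::comm_ring_1 mat)"
  by (rule eq_matI) (simp_all add: algebra_simps)

lemma ma_oneL: "dim_row A = n \<Longrightarrow> 1\<^sub>m n * A = (A::'a::comm_ring_1 mat)"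
  by (metis left_mult_one_mat carrier_matI)

lemma ma_oneR: "dim_col A = n \<Longrightarrow> A * 1\<^sub>m n = (A::'a::comm_ring_1 mat)"
  by (metis right_mult_one_mat carrier_matI)

lemmas ma_dims = index_mult_mat(2,3) index_add_mat(2,3) index_minus_mat(2,3) index_smult_mat(2,3) index_uminus_mat(2,3)
  index_one_mat(2,3) dim_mult_mat_vec

lemma ma_smult_one: "1 \<cdot>\<^sub>m A = (A::'a::comm_ring_1 mat)"
  by (rule eq_matI) auto

lemma mv_smult_one: "1 \<cdot>\<^sub>v v = (v::'a::comm_ring_1 vec)"
  by (rule eq_vecI) auto

lemmas ma_idx = index_add_mat(1) index_minus_mat(1) index_smult_mat(1) index_uminus_mat(1)

lemmas ma_simps = ma_smult_one ma_assoc ma_distL ma_distR ma_minus ma_uminus ma_smultL ma_smultR ma_smult2 ma_smult_add ma_oneL ma_oneR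

lemma ma_entries_eqI: "dim_row A = dim_row B \<Longrightarrow> dim_col A = dim_col B \<Longrightarrow>
  (\<And>i j. i < dim_row B \<Longrightarrow> j < dim_col B \<Longrightarrow> A $$ (i,j) = B $$ (i,j)) \<Longrightarrow> A = B"
  by (rule eq_matI) auto

lemma mv_assoc: "dim_col A = dim_row B \<Longrightarrow> dim_col B = dim_vec v \<Longrightarrow> A * B *\<^sub>v v = A *\<^sub>v (B *\<^sub>v (v::'a::comm_ring_1 vec))"
  by (metis assoc_mult_mat_vec carrier_matI carrier_vecI)

lemma mv_distL: "dim_col A = dim_vec v \<Longrightarrow> dim_vec v = dim_vec w \<Longrightarrow>
   A *\<^sub>v (v + w) = A *\<^sub>v v + A *\<^sub>v (w::'a::comm_ring_1 vec)"
  by (metis mult_add_distrib_mat_vec carrier_matI carrier_vecI)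

lemma mv_distR: "dim_row A = dim_row B \<Longrightarrow> dim_col A = dim_col B \<Longrightarrow> dim_col A = dim_vec v \<Longrightarrow>
   (A + B) *\<^sub>v v = A *\<^sub>v v + B *\<^sub>v (v::'a::comm_ring_1 vec)"
  by (metis add_mult_distrib_mat_vec carrier_matI carrier_vecI)

lemma mv_minus: "dim_vec v = dim_vec w \<Longrightarrow> v - w = v + (-1) \<cdot>\<^sub>v (w::'a::comm_ring_1 vec)"
  by (rule eq_vecI) auto

lemma mv_uminus: "- v = (-1) \<cdot>\<^sub>v (v::'a::comm_ring_1 vec)"
  by (rule eq_vecI) auto

lemma mv_smultL: "dim_col A = dim_vec v \<Longrightarrow> (c \<cdot>\<^sub>m A) *\<^sub>v v = c \<cdot>\<^sub>v (A *\<^sub>v (v::'a::comm_ring_1 vec))"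
  by (rule eq_vecI) (auto simp: scalar_prod_def sum_distrib_left ac_simps)

lemma mv_smultR: "dim_col A = dim_vec v \<Longrightarrow> A *\<^sub>v (c \<cdot>\<^sub>v v) = c \<cdot>\<^sub>v (A *\<^sub>v (v::'a::comm_ring_1 vec))"
  by (rule eq_vecI) (auto simp: scalar_prod_def sum_distrib_left ac_simps)

lemma mv_smult2: "c \<cdot>\<^sub>v (d \<cdot>\<^sub>v v) = (c * d) \<cdot>\<^sub>v (v::'a::comm_ring_1 vec)"
  by (rule eq_vecI) auto

lemma mv_smult_add: "dim_vec v = dim_vec w \<Longrightarrow> c \<cdot>\<^sub>v (v + w) = c \<cdot>\<^sub>v v + c \<cdot>\<^sub>v (w::'a::comm_ring_1 vec)"
  by (rule eq_vecI) (simp_all add: algebra_simps)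

lemma mv_one: "dim_vec v = n \<Longrightarrow> 1\<^sub>m n *\<^sub>v v = (v::'a::comm_ring_1 vec)"
  by (metis one_mult_mat_vec carrier_vecI)

lemmas mv_simps = mv_smult_one mv_assoc mv_distL mv_distR mv_minus mv_uminus mv_smultL mv_smultR mv_smult2 mv_smult_add mv_one
lemmas mv_dims = index_add_vec(2) index_minus_vec(2) index_smult_vec(2) index_uminus_vec(2) dim_mult_mat_vec
lemmas mv_idx = index_add_vec(1) index_minus_vec(1) index_smult_vec(1) index_uminus_vec(1)

lemma mv_entries_eqI: "dim_vec v = dim_vec w \<Longrightarrow> (\<And>i. i < dim_vec w \<Longrightarrow> v $ i = w $ i) \<Longrightarrow> v = w"
  by (rule eq_vecI) auto

lemma adj_dims[simp]: "dim_row (adj A) = dim_col A" "dim_col (adj A) = dim_row A"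
  by (auto simp: adj_def)

lemma adj_index[simp]: "i < dim_col A \<Longrightarrow> j < dim_row A \<Longrightarrow> adj A $$ (i,j) = cnj (A $$ (j,i))"
  by (auto simp: adj_def)

lemma alg_x:
  fixes s L Q Y M Mi D Dc :: "complex mat" and Phi Om :: "complex vec"
  assumes d: "dim_row s = m" "dim_col s = m" "dim_row L = m" "dim_col L = m" "dim_row Q = m" "dim_col Q = m"
     "dim_row Y = m" "dim_col Y = n" "dim_row M = n" "dim_col M = n" "dim_row Mi = n" "dim_col Mi = n"
     "dim_row D = n" "dim_col D = n" "dim_row Dc = n" "dim_col Dc = n" "dim_vec Phi = m" "dim_vec Om = n"
  and sL: "s * L = L * s"
  and R1: "adj Y * L * Y = \<i> \<cdot>\<^sub>m (M * D - Dc * M)"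
  and R2: "adj Y *\<^sub>v (L *\<^sub>v Phi) = \<i> \<cdot>\<^sub>v (lam \<cdot>\<^sub>v Om - Dc *\<^sub>v Om)"
  and MMi: "M * Mi = 1\<^sub>m n" "Mi * M = 1\<^sub>m n"
  shows "((\<i>*lam) \<cdot>\<^sub>m s + \<i> \<cdot>\<^sub>m Q) *\<^sub>v Phi - ((\<i> \<cdot>\<^sub>m (s*Y*D) + \<i> \<cdot>\<^sub>m (Q*Y)) *\<^sub>v (Mi *\<^sub>v Om)
     + Y *\<^sub>v ((-(Mi * (adj Y * (L * s) * Y) * Mi)) *\<^sub>v Om + Mi *\<^sub>v (adj Y *\<^sub>v ((L * s) *\<^sub>v Phi))))
   = ((\<i>*lam) \<cdot>\<^sub>m s + \<i> \<cdot>\<^sub>m (Q - \<i> \<cdot>\<^sub>m (s*(Y*Mi*adj Y* L) - (Y*Mi* adj Y * L) * s))) *\<^sub>v (Phi - Y *\<^sub>v (Mi *\<^sub>v Om))"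
proof -
  have r1: "adj Y * (L * (Y * X)) = \<i> \<cdot>\<^sub>m (M * (D * X)) + (-\<i>) \<cdot>\<^sub>m (Dc * (M * X))" if "dim_row X = n" for X
  proof -
    have "adj Y * (L * (Y * X)) = (adj Y * L * Y) * X" using that by (simp add: d ma_simps ma_dims)
    also have "\<dots> = \<i> \<cdot>\<^sub>m (M * (D * X)) + (-\<i>) \<cdot>\<^sub>m (Dc * (M * X))" unfolding R1 using that by (simp add: d ma_simps ma_dims)
    finally show ?thesis .
  qed
  have r1v: "adj Y *\<^sub>v (L *\<^sub>v (Y *\<^sub>v w)) = \<i> \<cdot>\<^sub>v (M *\<^sub>v (D *\<^sub>v w)) + (-\<i>) \<cdot>\<^sub>v (Dc *\<^sub>v (M *\<^sub>v w))" if "dim_vec w = n" for w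
  proof -
    have "adj Y *\<^sub>v (L *\<^sub>v (Y *\<^sub>v w)) = (adj Y * L * Y) *\<^sub>v w" using that by (simp add: d mv_simps ma_dims)
    also have "\<dots> = \<i> \<cdot>\<^sub>v (M *\<^sub>v (D *\<^sub>v w)) + (-\<i>) \<cdot>\<^sub>v (Dc *\<^sub>v (M *\<^sub>v w))" unfolding R1 using that
      by (simp add: d mv_simps ma_simps ma_dims)
    finally show ?thesis .
  qed
  have r2: "adj Y *\<^sub>v (L *\<^sub>v Phi) = (\<i>*lam) \<cdot>\<^sub>v Om + (-\<i>) \<cdot>\<^sub>v (Dc *\<^sub>v Om)"
    unfolding R2 by (simp add: d mv_simps mv_dims)
  have mm: "M *\<^sub>v (Mi *\<^sub>v w) = w" "Mi *\<^sub>v (M *\<^sub>v w) = w" if "dim_vec w = n" for w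
    using that by (simp_all add: d mv_simps ma_dims MMi flip: mv_assoc)
  have sl: "s *\<^sub>v (L *\<^sub>v w) = L *\<^sub>v (s *\<^sub>v w)" if "dim_vec w = m" for w
    using that by (simp add: d mv_simps ma_dims sL flip: mv_assoc)
  show ?thesis
    apply (simp only: d mv_simps ma_simps ma_dims mv_dims adj_dims r1v r2 mm sl)
    apply (rule mv_entries_eqI)
     apply (simp_all only: d ma_dims mv_dims adj_dims)
    apply (simp only: d ma_dims mv_dims mv_idx adj_dims)
    apply (simp add: algebra_simps del: index_mult_mat index_mult_mat_vec)
    done
qed


lemma alg_QnQn:
  fixes s L Q Y M Mi D Dc Gx :: "complex mat"
  assumes d: "dim_row s = m" "dim_col s = m" "dim_row L = m" "dim_col L = m" "dim_row Q = m" "dim_col Q = m"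
     "dim_row Y = m" "dim_col Y = n" "dim_row M = n" "dim_col M = n" "dim_row Mi = n" "dim_col Mi = n"
     "dim_row D = n" "dim_col D = n" "dim_row Dc = n" "dim_col Dc = n" "dim_row Gx = n" "dim_col Gx = m"
  and ss: "s * s = 1\<^sub>m m"
  and sL: "s * L = L * s"
  and Qs: "Q * s = - (s * Q)"
  and R1: "adj Y * L * Y = \<i> \<cdot>\<^sub>m (M * D - Dc * M)"
  and MMi: "M * Mi = 1\<^sub>m n" "Mi * M = 1\<^sub>m n"
  and GxL: "Gx * L = (-\<i>) \<cdot>\<^sub>m (Dc * adj Y * L * s) + (-\<i>) \<cdot>\<^sub>m (adj Y * L * Q)"
  and P_def: "P = Y * Mi * adj Y * L"
  and Px_def: "Px = (\<i> \<cdot>\<^sub>m (s*Y*D) + \<i> \<cdot>\<^sub>m (Q*Y)) * Mi * adj Y * L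
      + Y * (- (Mi * (adj Y * (L * s) * Y) * Mi)) * adj Y * L + Y * Mi * Gx * L"
  shows "(Q - \<i> \<cdot>\<^sub>m (s * P - P * s)) * (Q - \<i> \<cdot>\<^sub>m (s * P - P * s)) = Q * Q + s * Px + Px * s"
proof -
  have mm1: "M * (Mi * X) = X" "Mi * (M * X) = X" if "dim_row X = n" for X
    using that by (simp_all add: d ma_dims MMi ma_oneL flip: ma_assoc)
  have dmi: "D * (Mi * X) = Mi * (Dc * X) + (-\<i>) \<cdot>\<^sub>m (Mi * (adj Y * (L * (Y * (Mi * X)))))" if "dim_row X = n" for X
  proof -
    have "Mi * (adj Y * L * Y) * Mi * X = \<i> \<cdot>\<^sub>m (Mi * (M * D - Dc * M) * Mi * X)"
      unfolding R1 using that by (simp add: d ma_simps ma_dims)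
    also have "\<dots> = \<i> \<cdot>\<^sub>m (D * (Mi * X)) + (-\<i>) \<cdot>\<^sub>m (Mi * (Dc * X))"
      using that by (simp add: d ma_simps ma_dims mm1)
    finally have e: "Mi * (adj Y * L * Y) * Mi * X = \<i> \<cdot>\<^sub>m (D * (Mi * X)) + (-\<i>) \<cdot>\<^sub>m (Mi * (Dc * X))" .
    have "(-\<i>) \<cdot>\<^sub>m (Mi * (adj Y * L * Y) * Mi * X) = D * (Mi * X) + (-1) \<cdot>\<^sub>m (Mi * (Dc * X))"
      unfolding e using that by (simp add: d ma_simps ma_dims)
    then show ?thesis using that
      apply (simp add: d ma_simps ma_dims)
      apply (rule ma_entries_eqI)
      apply (simp_all only: d ma_dims adj_dims)
      apply (drule_tac f="\<lambda>A. A $$ (i,j)" in arg_cong)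
      apply (simp only: d ma_dims ma_idx adj_dims)
      apply (simp add: algebra_simps del: index_mult_mat)
      done
  qed
  have ss1: "s * (s * X) = X" if "dim_row X = m" for X
    using that by (simp add: d ma_dims ss ma_oneL flip: ma_assoc)
  have qs1: "Q * (s * X) = (-1) \<cdot>\<^sub>m (s * (Q * X))" if "dim_row X = m" for X
    using that by (simp add: d ma_dims Qs ma_simps flip: ma_assoc)
  have qs0: "Q * s = (-1) \<cdot>\<^sub>m (s * Q)" by (simp add: Qs ma_uminus)
  have sl1: "s * (L * X) = L * (s * X)" if "dim_row X = m" for X
    using that by (simp add: d ma_dims sL flip: ma_assoc)
  have gx1: "Gx * (L * X) = (-\<i>) \<cdot>\<^sub>m (Dc * (adj Y * (L * (s * X)))) + (-\<i>) \<cdot>\<^sub>m (adj Y * (L * (Q * X)))" if "dim_row X = m" for X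
  proof -
    have "Gx * (L * X) = (Gx * L) * X" using that by (simp add: d ma_dims ma_assoc)
    then show ?thesis unfolding GxL using that by (simp add: d ma_dims ma_simps)
  qed
  have gx0: "Gx * L = (-\<i>) \<cdot>\<^sub>m (Dc * (adj Y * (L * s))) + (-\<i>) \<cdot>\<^sub>m (adj Y * (L * Q))"
    unfolding GxL by (simp add: d ma_dims ma_simps)
  show ?thesis
    unfolding Px_def P_def
    apply (simp only: d ma_simps ma_dims adj_dims ss1 ss qs1 qs0 sl1 sL gx1 gx0 dmi)
    apply (rule ma_entries_eqI)
      apply (simp_all only: d ma_dims adj_dims)
    apply (simp only: d ma_dims ma_idx adj_dims)
    apply (simp add: algebra_simps del: index_mult_mat)
    done
qed


lemma alg_t:
  fixes s L Q Qx Y M Mi D Dc Gx :: "complex mat" and Phi Om :: "complex vec"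
  assumes d: "dim_row s = m" "dim_col s = m" "dim_row L = m" "dim_col L = m" "dim_row Q = m" "dim_col Q = m"
     "dim_row Qx = m" "dim_col Qx = m"
     "dim_row Y = m" "dim_col Y = n" "dim_row M = n" "dim_col M = n" "dim_row Mi = n" "dim_col Mi = n"
     "dim_row D = n" "dim_col D = n" "dim_row Dc = n" "dim_col Dc = n" "dim_row Gx = n" "dim_col Gx = m"
     "dim_vec Phi = m" "dim_vec Om = n"
  and ss: "s * s = 1\<^sub>m m"
  and sL: "s * L = L * s"
  and R1: "adj Y * L * Y = \<i> \<cdot>\<^sub>m (M * D - Dc * M)"
  and R2: "adj Y *\<^sub>v (L *\<^sub>v Phi) = \<i> \<cdot>\<^sub>v (lam \<cdot>\<^sub>v Om - Dc *\<^sub>v Om)"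
  and MMi: "M * Mi = 1\<^sub>m n" "Mi * M = 1\<^sub>m n"
  and GxL: "Gx * L = (-\<i>) \<cdot>\<^sub>m (Dc * adj Y * L * s) + (-\<i>) \<cdot>\<^sub>m (adj Y * L * Q)"
  and P_def: "P = Y * Mi * adj Y * L"
  and Px_def: "Px = (\<i> \<cdot>\<^sub>m (s*Y*D) + \<i> \<cdot>\<^sub>m (Q*Y)) * Mi * adj Y * L
      + Y * (- (Mi * (adj Y * (L * s) * Y) * Mi)) * adj Y * L + Y * Mi * Gx * L"
  and Qn_def: "Qn = Q - \<i> \<cdot>\<^sub>m (s * P - P * s)"
  and QnQn: "Qn * Qn = Q * Q + s * Px + Px * s"
  and V0_def: "V0 = - ((1/2) \<cdot>\<^sub>m (\<i> \<cdot>\<^sub>m (s * (Q * Q)) - s * Qx))"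
  shows "((\<i> * lam^2) \<cdot>\<^sub>m s + (\<i> * lam) \<cdot>\<^sub>m Q + V0) *\<^sub>v Phi
     - ((\<i> \<cdot>\<^sub>m (s*Y*(D*D)) + \<i> \<cdot>\<^sub>m (Q*Y*D) + V0*Y) *\<^sub>v (Mi *\<^sub>v Om)
        + Y *\<^sub>v ((- (Mi * (adj Y * (L * s) * Y * D + Dc * (adj Y * (L * s) * Y) + adj Y * (L * Q) * Y) * Mi)) *\<^sub>v Om
          + Mi *\<^sub>v (lam \<cdot>\<^sub>v (adj Y *\<^sub>v ((L * s) *\<^sub>v Phi)) + Dc *\<^sub>v (adj Y *\<^sub>v ((L * s) *\<^sub>v Phi))
                  + adj Y *\<^sub>v ((L * Q) *\<^sub>v Phi))))
   = ((\<i> * lam^2) \<cdot>\<^sub>m s + (\<i> * lam) \<cdot>\<^sub>m Qn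
       - (1/2) \<cdot>\<^sub>m (\<i> \<cdot>\<^sub>m (s * (Qn * Qn)) - s * (Qx - \<i> \<cdot>\<^sub>m (s * Px - Px * s)))) *\<^sub>v (Phi - Y *\<^sub>v (Mi *\<^sub>v Om))"
proof -
  have r1v: "adj Y *\<^sub>v (L *\<^sub>v (Y *\<^sub>v w)) = \<i> \<cdot>\<^sub>v (M *\<^sub>v (D *\<^sub>v w)) + (-\<i>) \<cdot>\<^sub>v (Dc *\<^sub>v (M *\<^sub>v w))" if "dim_vec w = n" for w
  proof -
    have "adj Y *\<^sub>v (L *\<^sub>v (Y *\<^sub>v w)) = (adj Y * L * Y) *\<^sub>v w" using that by (simp add: d mv_simps ma_dims)
    also have "\<dots> = \<i> \<cdot>\<^sub>v (M *\<^sub>v (D *\<^sub>v w)) + (-\<i>) \<cdot>\<^sub>v (Dc *\<^sub>v (M *\<^sub>v w))" unfolding R1 using that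
      by (simp add: d mv_simps ma_simps ma_dims)
    finally show ?thesis .
  qed
  have r2: "adj Y *\<^sub>v (L *\<^sub>v Phi) = (\<i>*lam) \<cdot>\<^sub>v Om + (-\<i>) \<cdot>\<^sub>v (Dc *\<^sub>v Om)"
    unfolding R2 by (simp add: d mv_simps mv_dims)
  have mm: "M *\<^sub>v (Mi *\<^sub>v w) = w" "Mi *\<^sub>v (M *\<^sub>v w) = w" if "dim_vec w = n" for w
    using that by (simp_all add: d mv_simps ma_dims MMi flip: mv_assoc)
  have sl: "s *\<^sub>v (L *\<^sub>v w) = L *\<^sub>v (s *\<^sub>v w)" if "dim_vec w = m" for w
    using that by (simp add: d mv_simps ma_dims sL flip: mv_assoc)
  have ssv: "s *\<^sub>v (s *\<^sub>v w) = w" if "dim_vec w = m" for w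
    using that by (simp add: d mv_simps ma_dims ss flip: mv_assoc)
  have gxv: "Gx *\<^sub>v (L *\<^sub>v w) = (-\<i>) \<cdot>\<^sub>v (Dc *\<^sub>v (adj Y *\<^sub>v (L *\<^sub>v (s *\<^sub>v w)))) + (-\<i>) \<cdot>\<^sub>v (adj Y *\<^sub>v (L *\<^sub>v (Q *\<^sub>v w)))" if "dim_vec w = m" for w
  proof -
    have "Gx *\<^sub>v (L *\<^sub>v w) = (Gx * L) *\<^sub>v w" using that by (simp add: d ma_dims mv_assoc)
    then show ?thesis unfolding GxL using that by (simp add: d ma_dims ma_simps mv_simps)
  qed
  show ?thesis
    unfolding QnQn
    unfolding Px_def Qn_def P_def V0_def
    apply (simp only: d ma_simps ma_dims mv_simps mv_dims adj_dims r1v r2 mm sl ssv gxv)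
    apply (rule mv_entries_eqI)
     apply (simp_all only: d ma_dims mv_dims adj_dims)
    apply (simp only: d ma_dims mv_dims mv_idx adj_dims)
    apply (simp add: algebra_simps power2_eq_square del: index_mult_mat index_mult_mat_vec)
    done
qed




section \<open>Derivatives of matrix/vector valued functions\<close>

definition mder :: "(real \<Rightarrow> complex mat) \<Rightarrow> complex mat \<Rightarrow> real \<Rightarrow> bool" where
  "mder F F' x \<longleftrightarrow> (\<forall>y. dim_row (F y) = dim_row F' \<and> dim_col (F y) = dim_col F') \<and>
    (\<forall>i<dim_row F'. \<forall>j<dim_col F'. ((\<lambda>y. F y $$ (i,j)) has_vector_derivative F' $$ (i,j)) (at x))"

definition vder :: "(real \<Rightarrow> complex vec) \<Rightarrow> complex vec \<Rightarrow> real \<Rightarrow> bool" where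
  "vder F F' x \<longleftrightarrow> (\<forall>y. dim_vec (F y) = dim_vec F') \<and>
    (\<forall>i<dim_vec F'. ((\<lambda>y. F y $ i) has_vector_derivative F' $ i) (at x))"

lemma mder_dims: "mder F F' x \<Longrightarrow> dim_row (F y) = dim_row F'" "mder F F' x \<Longrightarrow> dim_col (F y) = dim_col F'"
  by (auto simp: mder_def)

lemma vder_dim: "vder F F' x \<Longrightarrow> dim_vec (F y) = dim_vec F'"
  by (auto simp: vder_def)

lemma mult_entry: "i < dim_row A \<Longrightarrow> j < dim_col B \<Longrightarrow> dim_col A = dim_row B \<Longrightarrow>
   (A * B) $$ (i,j) = (\<Sum>k\<in>{0..<dim_col A}. A $$ (i,k) * B $$ (k,j))"
  by (simp add: scalar_prod_def)

lemma multv_entry: "i < dim_row A \<Longrightarrow> dim_col A = dim_vec v \<Longrightarrow>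
   (A *\<^sub>v v) $ i = (\<Sum>k\<in>{0..<dim_col A}. A $$ (i,k) * v $ k)"
  by (simp add: scalar_prod_def)

lemma mder_add: "mder F F' x \<Longrightarrow> mder G G' x \<Longrightarrow> dim_row F' = dim_row G' \<Longrightarrow> dim_col F' = dim_col G' \<Longrightarrow>
  mder (\<lambda>y. F y + G y) (F' + G') x"
  unfolding mder_def by (auto intro!: has_vector_derivative_add)

lemma mder_diff: "mder F F' x \<Longrightarrow> mder G G' x \<Longrightarrow> dim_row F' = dim_row G' \<Longrightarrow> dim_col F' = dim_col G' \<Longrightarrow>
  mder (\<lambda>y. F y - G y) (F' - G') x"
  unfolding mder_def by (auto intro!: has_vector_derivative_diff)

lemma mder_smult: "mder F F' x \<Longrightarrow> mder (\<lambda>y. c \<cdot>\<^sub>m F y) (c \<cdot>\<^sub>m F') x"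
  unfolding mder_def by (auto intro!: has_vector_derivative_mult_right)

lemma mder_uminus: "mder F F' x \<Longrightarrow> mder (\<lambda>y. - F y) (- F') x"
  unfolding mder_def by (auto intro!: has_vector_derivative_minus)

lemma mder_mult: assumes F: "mder F F' x" and G: "mder G G' x" and d: "dim_col F' = dim_row G'"
  shows "mder (\<lambda>y. F y * G y) (F' * G x + F x * G') x"
proof -
  have dF: "dim_row (F y) = dim_row F'" "dim_col (F y) = dim_col F'" for y using F by (auto simp: mder_def)
  have dG: "dim_row (G y) = dim_row G'" "dim_col (G y) = dim_col G'" for y using G by (auto simp: mder_def)
  show ?thesis unfolding mder_def
  proof (intro conjI allI impI)
    fix y show "dim_row (F y * G y) = dim_row (F' * G x + F x * G')" "dim_col (F y * G y) = dim_col (F' * G x + F x * G')"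
      using dF dG by auto
  next
    fix i j assume i: "i < dim_row (F' * G x + F x * G')" and j: "j < dim_col (F' * G x + F x * G')"
    have i': "i < dim_row F'" and j': "j < dim_col G'" using i j dF dG by auto
    have e: "(\<lambda>y. (F y * G y) $$ (i,j)) = (\<lambda>y. \<Sum>k\<in>{0..<dim_col F'}. F y $$ (i,k) * G y $$ (k,j))"
      using dF dG i' j' d by (intro ext, subst mult_entry) auto
    have r: "(F' * G x + F x * G') $$ (i,j) = (\<Sum>k\<in>{0..<dim_col F'}. F x $$ (i,k) * G' $$ (k,j) + F' $$ (i,k) * G x $$ (k,j))"
      using dF dG i' j' d by (auto simp: scalar_prod_def sum.distrib add.commute)
    show "((\<lambda>y. (F y * G y) $$ (i,j)) has_vector_derivative (F' * G x + F x * G') $$ (i,j)) (at x)"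
      unfolding e r
      apply (rule has_vector_derivative_sum)
      apply (rule has_vector_derivative_mult)
      using F G i' j' d by (auto simp: mder_def)
  qed
qed

lemma mder_multC: assumes F: "mder F F' x" and d: "dim_col F' = dim_row C"
  shows "mder (\<lambda>y. F y * C) (F' * C) x"
proof -
  have dF: "dim_row (F y) = dim_row F'" "dim_col (F y) = dim_col F'" for y using F by (auto simp: mder_def)
  show ?thesis unfolding mder_def
  proof (intro conjI allI impI)
    fix y show "dim_row (F y * C) = dim_row (F' * C)" "dim_col (F y * C) = dim_col (F' * C)"
      using dF by auto
  next
    fix i j assume i: "i < dim_row (F' * C)" and j: "j < dim_col (F' * C)"
    have i': "i < dim_row F'" and j': "j < dim_col C" using i j by auto
    have e: "(\<lambda>y. (F y * C) $$ (i,j)) = (\<lambda>y. \<Sum>k\<in>{0..<dim_col F'}. F y $$ (i,k) * C $$ (k,j))"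
      using dF i' j' d by (intro ext, subst mult_entry) auto
    have r: "(F' * C) $$ (i,j) = (\<Sum>k\<in>{0..<dim_col F'}. F' $$ (i,k) * C $$ (k,j))"
      using i' j' d by (auto simp: scalar_prod_def)
    show "((\<lambda>y. (F y * C) $$ (i,j)) has_vector_derivative (F' * C) $$ (i,j)) (at x)"
      unfolding e r
      apply (rule has_vector_derivative_sum)
      apply (rule has_vector_derivative_mult_left)
      using F i' j' d by (auto simp: mder_def)
  qed
qed

lemma mder_Cmult: assumes F: "mder F F' x" and d: "dim_col C = dim_row F'"
  shows "mder (\<lambda>y. C * F y) (C * F') x"
proof -
  have dF: "dim_row (F y) = dim_row F'" "dim_col (F y) = dim_col F'" for y using F by (auto simp: mder_def)
  show ?thesis unfolding mder_def
  proof (intro conjI allI impI)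
    fix y show "dim_row (C * F y) = dim_row (C * F')" "dim_col (C * F y) = dim_col (C * F')"
      using dF by auto
  next
    fix i j assume i: "i < dim_row (C * F')" and j: "j < dim_col (C * F')"
    have i': "i < dim_row C" and j': "j < dim_col F'" using i j by auto
    have e: "(\<lambda>y. (C * F y) $$ (i,j)) = (\<lambda>y. \<Sum>k\<in>{0..<dim_col C}. C $$ (i,k) * F y $$ (k,j))"
      using dF i' j' d by (intro ext, subst mult_entry) auto
    have r: "(C * F') $$ (i,j) = (\<Sum>k\<in>{0..<dim_col C}. C $$ (i,k) * F' $$ (k,j))"
      using i' j' d by (auto simp: scalar_prod_def)
    show "((\<lambda>y. (C * F y) $$ (i,j)) has_vector_derivative (C * F') $$ (i,j)) (at x)"
      unfolding e r
      apply (rule has_vector_derivative_sum)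
      apply (rule has_vector_derivative_mult_right)
      using F i' j' d by (auto simp: mder_def)
  qed
qed

lemma mder_adj: assumes F: "mder F F' x" shows "mder (\<lambda>y. adj (F y)) (adj F') x"
  using F unfolding mder_def by (auto intro!: has_vector_derivative_cnj)

lemma vder_add: "vder F F' x \<Longrightarrow> vder G G' x \<Longrightarrow> dim_vec F' = dim_vec G' \<Longrightarrow>
  vder (\<lambda>y. F y + G y) (F' + G') x"
  unfolding vder_def by (auto intro!: has_vector_derivative_add)

lemma vder_diff: "vder F F' x \<Longrightarrow> vder G G' x \<Longrightarrow> dim_vec F' = dim_vec G' \<Longrightarrow>
  vder (\<lambda>y. F y - G y) (F' - G') x"
  unfolding vder_def by (auto intro!: has_vector_derivative_diff)

lemma mder_multv: assumes F: "mder F F' x" and G: "vder G G' x" and d: "dim_col F' = dim_vec G'"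
  shows "vder (\<lambda>y. F y *\<^sub>v G y) (F' *\<^sub>v G x + F x *\<^sub>v G') x"
proof -
  have dF: "dim_row (F y) = dim_row F'" "dim_col (F y) = dim_col F'" for y using F by (auto simp: mder_def)
  have dG: "dim_vec (G y) = dim_vec G'" for y using G by (auto simp: vder_def)
  show ?thesis unfolding vder_def
  proof (intro conjI allI impI)
    fix y show "dim_vec (F y *\<^sub>v G y) = dim_vec (F' *\<^sub>v G x + F x *\<^sub>v G')"
      using dF dG by auto
  next
    fix i assume i: "i < dim_vec (F' *\<^sub>v G x + F x *\<^sub>v G')"
    have i': "i < dim_row F'" using i dF by auto
    have e: "(\<lambda>y. (F y *\<^sub>v G y) $ i) = (\<lambda>y. \<Sum>k\<in>{0..<dim_col F'}. F y $$ (i,k) * G y $ k)"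
      using dF dG i' d by (intro ext, subst multv_entry) auto
    have r: "(F' *\<^sub>v G x + F x *\<^sub>v G') $ i = (\<Sum>k\<in>{0..<dim_col F'}. F x $$ (i,k) * G' $ k + F' $$ (i,k) * G x $ k)"
      using dF dG i' d by (auto simp: scalar_prod_def sum.distrib add.commute)
    show "((\<lambda>y. (F y *\<^sub>v G y) $ i) has_vector_derivative (F' *\<^sub>v G x + F x *\<^sub>v G') $ i) (at x)"
      unfolding e r
      apply (rule has_vector_derivative_sum)
      apply (rule has_vector_derivative_mult)
      using F G i' d by (auto simp: mder_def vder_def)
  qed
qed

lemma mder_unique: "mder F A x \<Longrightarrow> mder F B x \<Longrightarrow> A = B"
  unfolding mder_def
  apply (rule eq_matI)
  apply (metis vector_derivative_unique_at)
  apply (metis)+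
  done

lemma mder_constant: "(\<And>y. F y = C) \<Longrightarrow> mder F (0\<^sub>m (dim_row C) (dim_col C)) x"
  unfolding mder_def by auto


section \<open>Inverse\<close>

lemma inv_props: assumes A: "A \<in> carrier_mat n n" and inv: "invertible_mat (A::complex mat)"
  shows "minv A * A = 1\<^sub>m n" "A * minv A = 1\<^sub>m n" "minv A \<in> carrier_mat n n" "det A \<noteq> 0"
proof -
  obtain B where AB: "A * B = 1\<^sub>m n" and BA: "B * A = 1\<^sub>m (dim_row B)"
    using inv A unfolding invertible_mat_def inverts_mat_def by auto
  have dB: "B \<in> carrier_mat n n"
  proof -
    have "dim_col B = n" using arg_cong[OF AB, of dim_col] by simp
    moreover have "dim_row B = n" using arg_cong[OF BA, of dim_col] A by simp
    ultimately show ?thesis by auto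
  qed
  then have BA': "B * A = 1\<^sub>m n" using BA by simp
  have U: "A \<in> Units (ring_mat TYPE(complex) n ())"
    unfolding Units_def ring_mat_simps using A dB AB BA' by auto
  show "det A \<noteq> 0" by (rule unit_imp_det_non_zero[OF U])
  have "mat_inverse A \<noteq> None" using mat_inverse(1)[OF A, of "()"] U by auto
  then obtain C where C: "mat_inverse A = Some C" by auto
  have "minv A = C" unfolding minv_def C by simp
  then show "minv A * A = 1\<^sub>m n" "A * minv A = 1\<^sub>m n" "minv A \<in> carrier_mat n n"
    using mat_inverse(2)[OF A C] by auto
qed

lemma minv_adj: assumes A: "A \<in> carrier_mat n n" and inv: "invertible_mat (A::complex mat)"
  shows "minv A = (1 / det A) \<cdot>\<^sub>m adj_mat A"
proof -
  note ip = inv_props[OF A inv]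
  have adj: "adj_mat A \<in> carrier_mat n n" "adj_mat A * A = det A \<cdot>\<^sub>m 1\<^sub>m n" using adj_mat[OF A] by auto
  let ?B = "(1 / det A) \<cdot>\<^sub>m adj_mat A"
  have BA: "?B * A = 1\<^sub>m n"
    using adj ip(4) A by (simp add: mult_smult_assoc_mat ma_smult2 ma_smult_one)
  have "?B = ?B * (A * minv A)" unfolding ip(2) by (rule right_mult_one_mat[symmetric]) (use adj in auto)
  also have "\<dots> = (?B * A) * minv A" by (rule assoc_mult_mat[symmetric]) (use ip adj A in auto)
  also have "\<dots> = minv A" using BA ip by simp
  finally show ?thesis by simp
qed

lemma differentiable_prod_fun:
  fixes f :: "'i \<Rightarrow> real \<Rightarrow> complex"
  shows "finite S \<Longrightarrow> (\<And>i. i \<in> S \<Longrightarrow> f i differentiable (at x)) \<Longrightarrow> (\<lambda>y. \<Prod>i\<in>S. f i y) differentiable (at x)"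
proof (induction S rule: finite_induct)
  case empty then show ?case by simp
next
  case (insert a S)
  then show ?case by (simp add: differentiable_mult)
qed

lemma det_differentiable:
  fixes G :: "real \<Rightarrow> complex mat"
  assumes dims: "\<And>y. G y \<in> carrier_mat m m"
    and ent: "\<And>i j. i < m \<Longrightarrow> j < m \<Longrightarrow> (\<lambda>y. G y $$ (i,j)) differentiable (at x)"
  shows "(\<lambda>y. det (G y)) differentiable (at x)"
proof -
  have e: "(\<lambda>y. det (G y)) = (\<lambda>y. \<Sum>p\<in>{p. p permutes {0..<m}}. signof p * (\<Prod>i = 0..<m. G y $$ (i, p i)))"
    using dims by (intro ext) (rule det_def')
  show ?thesis unfolding e
    apply (rule differentiable_sum)
     apply (simp add: finite_permutations)
    apply (intro ballI differentiable_mult differentiable_const differentiable_prod_fun)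
     apply simp
    apply (rule ent)
    apply simp
    by (simp add: permutes_in_image)
qed

lemma minv_entry_differentiable:
  fixes F :: "real \<Rightarrow> complex mat"
  assumes dims: "\<And>y. F y \<in> carrier_mat n n" and inv: "\<And>y. invertible_mat (F y)"
    and ent: "\<And>i j. i < n \<Longrightarrow> j < n \<Longrightarrow> (\<lambda>y. F y $$ (i,j)) differentiable (at x)"
    and ij: "i < n" "j < n"
  shows "(\<lambda>y. minv (F y) $$ (i,j)) differentiable (at x)"
proof -
  have e: "(\<lambda>y. minv (F y) $$ (i,j)) = (\<lambda>y. (1 / det (F y)) * ((-1)^(j+i) * det (mat_delete (F y) j i)))"
  proof
    fix y
    have "minv (F y) $$ (i,j) = ((1 / det (F y)) \<cdot>\<^sub>m adj_mat (F y)) $$ (i,j)"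
      by (simp add: minv_adj[OF dims inv])
    also have "\<dots> = (1 / det (F y)) * ((-1)^(j+i) * det (mat_delete (F y) j i))"
      using dims[of y] ij by (simp add: adj_mat_def cofactor_def)
    finally show "minv (F y) $$ (i,j) = (1 / det (F y)) * ((-1)^(j+i) * det (mat_delete (F y) j i))" .
  qed
  have dd: "(\<lambda>y. det (F y)) differentiable (at x)"
    by (rule det_differentiable[OF dims ent])
  have dm: "(\<lambda>y. det (mat_delete (F y) j i)) differentiable (at x)"
  proof (rule det_differentiable[where m="n-1"])
    fix y show "mat_delete (F y) j i \<in> carrier_mat (n-1) (n-1)" by (rule mat_delete_carrier[OF dims])
  next
    fix a b assume ab: "a < n - 1" "b < n - 1"
    have "(\<lambda>y. mat_delete (F y) j i $$ (a,b)) = (\<lambda>y. F y $$ (if a < j then a else Suc a, if b < i then b else Suc b))"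
      using ab by (intro ext) (simp add: mat_delete_def dims[THEN carrier_matD(1)] dims[THEN carrier_matD(2)])
    moreover have "(\<lambda>y. F y $$ (if a < j then a else Suc a, if b < i then b else Suc b)) differentiable (at x)"
      using ab by (intro ent) auto
    ultimately show "(\<lambda>y. mat_delete (F y) j i $$ (a,b)) differentiable (at x)" by simp
  qed
  have nz: "det (F x) \<noteq> 0" using inv_props(4)[OF dims inv] .
  show ?thesis unfolding e
    using dd dm nz by (auto intro!: differentiable_mult differentiable_divide)
qed

lemma mder_minv:
  assumes F: "mder F F' x" and dims: "\<And>y. F y \<in> carrier_mat n n" and inv: "\<And>y. invertible_mat (F y)"
  shows "mder (\<lambda>y. minv (F y)) (- (minv (F x) * F' * minv (F x))) x"
proof -
  have dF': "F' \<in> carrier_mat n n" using F dims[of x] unfolding mder_def by (metis carrier_matD carrier_matI)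
  have ent: "(\<lambda>y. F y $$ (i,j)) differentiable (at x)" if "i < n" "j < n" for i j
    using F that dF' unfolding mder_def by (auto intro: differentiableI_vector)
  define G' where "G' = mat n n (\<lambda>(i,j). vector_derivative (\<lambda>y. minv (F y) $$ (i,j)) (at x))"
  have Gd: "mder (\<lambda>y. minv (F y)) G' x"
    unfolding mder_def G'_def
    using inv_props(3)[OF dims inv] minv_entry_differentiable[OF dims inv ent]
    by (auto simp: vector_derivative_works[symmetric])
  have dG': "G' \<in> carrier_mat n n" unfolding G'_def by simp
  have prod: "mder (\<lambda>y. minv (F y) * F y) (G' * F x + minv (F x) * F') x"
    by (rule mder_mult[OF Gd F]) (use dG' dF' in auto)
  have const: "mder (\<lambda>y. minv (F y) * F y) (0\<^sub>m n n) x"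
  proof -
    show ?thesis using mder_constant[of "\<lambda>y. minv (F y) * F y" "1\<^sub>m n" x] inv_props(1)[OF dims inv] by simp
  qed
  have eq: "G' * F x + minv (F x) * F' = 0\<^sub>m n n" using mder_unique[OF prod const] .
  note ip = inv_props[OF dims inv, of x]
  have Fx: "F x \<in> carrier_mat n n" by (rule dims)
  have "G' = G' * (F x * minv (F x))" using ip dG' by simp
  also have "\<dots> = (G' * F x) * minv (F x)" by (rule assoc_mult_mat[symmetric]) (use ip dG' Fx in auto)
  also have "G' * F x = - (minv (F x) * F')"
  proof -
    have "G' * F x = (G' * F x + minv (F x) * F') - minv (F x) * F'"
      using dG' Fx ip dF' by (intro eq_matI) auto
    also have "\<dots> = - (minv (F x) * F')" unfolding eq using ip dF' by (intro eq_matI) auto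
    finally show ?thesis .
  qed
  also have "- (minv (F x) * F') * minv (F x) = - (minv (F x) * F' * minv (F x))"
    using ip dF' by (simp add: ma_uminus ma_smultL)
  finally show ?thesis using Gd by simp
qed




lemma vder_Cmultv: assumes F: "vder F F' x" and d: "dim_col C = dim_vec F'"
  shows "vder (\<lambda>y. C *\<^sub>v F y) (C *\<^sub>v F') x"
proof -
  have dF: "dim_vec (F y) = dim_vec F'" for y using F by (auto simp: vder_def)
  show ?thesis unfolding vder_def
  proof (intro conjI allI impI)
    fix y show "dim_vec (C *\<^sub>v F y) = dim_vec (C *\<^sub>v F')" by simp
  next
    fix i assume i: "i < dim_vec (C *\<^sub>v F')"
    have i': "i < dim_row C" using i by auto
    have e: "(\<lambda>y. (C *\<^sub>v F y) $ i) = (\<lambda>y. \<Sum>k\<in>{0..<dim_col C}. C $$ (i,k) * F y $ k)"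
      using dF i' d by (intro ext, subst multv_entry) auto
    have r: "(C *\<^sub>v F') $ i = (\<Sum>k\<in>{0..<dim_col C}. C $$ (i,k) * F' $ k)"
      using i' d by (auto simp: scalar_prod_def)
    show "((\<lambda>y. (C *\<^sub>v F y) $ i) has_vector_derivative (C *\<^sub>v F') $ i) (at x)"
      unfolding e r
      apply (rule has_vector_derivative_sum)
      apply (rule has_vector_derivative_mult_right)
      using F d by (auto simp: vder_def)
  qed
qed

lemma herm_der: assumes u: "vder u u' x" and v: "vder v v' x" and d: "dim_vec u' = dim_row A" "dim_col A = dim_vec v'"
  shows "((\<lambda>y. herm (u y) A (v y)) has_vector_derivative (herm u' A (v x) + herm (u x) A v')) (at x)"
proof -
  have du: "dim_vec (u y) = dim_vec u'" for y using u by (auto simp: vder_def)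
  have Av: "vder (\<lambda>y. A *\<^sub>v v y) (A *\<^sub>v v') x" by (rule vder_Cmultv[OF v d(2)])
  have e: "(\<lambda>y. herm (u y) A (v y)) = (\<lambda>y. \<Sum>i<dim_vec u'. cnj (u y $ i) * (A *\<^sub>v v y) $ i)"
    unfolding herm_def du ..
  have r: "herm u' A (v x) + herm (u x) A v' = (\<Sum>i<dim_vec u'. cnj (u x $ i) * (A *\<^sub>v v') $ i + cnj (u' $ i) * (A *\<^sub>v v x) $ i)"
    unfolding herm_def du sum.distrib by simp
  show ?thesis unfolding e r
    apply (rule has_vector_derivative_sum)
    apply (rule has_vector_derivative_mult)
     apply (rule has_vector_derivative_cnj)
    using u Av d by (auto simp: vder_def)
qed

lemma herm_add: "herm u (B + C) v = herm u B v + herm u C v" if "dim_row B = dim_row C" "dim_col B = dim_col C"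
  "dim_col C = dim_vec v" "dim_vec u = dim_row C"
proof -
  have e: "(B + C) *\<^sub>v v = B *\<^sub>v v + C *\<^sub>v v" by (rule mv_distR) (use that in auto)
  show ?thesis unfolding herm_def e sum.distrib[symmetric] using that
    by (intro sum.cong) (auto simp: algebra_simps simp del: index_mult_mat_vec)
qed

lemma herm_smult: "herm u (c \<cdot>\<^sub>m B) v = c * herm u B v" if "dim_col B = dim_vec v" "dim_vec u = dim_row B"
  using that unfolding herm_def
  by (simp add: mv_smultL sum_distrib_left algebra_simps)

lemma herm_mult_right: "herm u B (A *\<^sub>v v) = herm u (B * A) v" if "dim_col B = dim_row A" "dim_col A = dim_vec v"
  using that unfolding herm_def by (simp add: mv_assoc)

lemma herm_mult_left: assumes d: "dim_row A = m" "dim_col A = m" "dim_row B = m" "dim_col B = m" "dim_vec u = m" "dim_vec v = m"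
  shows "herm (A *\<^sub>v u) B v = herm u (adj A * B) v"
proof -
  have "herm (A *\<^sub>v u) B v = (\<Sum>i<m. cnj (\<Sum>k\<in>{0..<m}. A $$ (i,k) * u $ k) * (B *\<^sub>v v) $ i)"
    unfolding herm_def using d by (intro sum.cong) (auto simp: multv_entry simp del: index_mult_mat_vec)
  also have "\<dots> = (\<Sum>i<m. \<Sum>k\<in>{0..<m}. cnj (u $ k) * (cnj (A $$ (i,k)) * (B *\<^sub>v v) $ i))"
    by (simp add: sum_distrib_right mult.assoc mult.left_commute)
  also have "\<dots> = (\<Sum>k\<in>{0..<m}. \<Sum>i<m. cnj (u $ k) * (cnj (A $$ (i,k)) * (B *\<^sub>v v) $ i))"
    by (rule sum.swap)
  also have "\<dots> = (\<Sum>k<m. cnj (u $ k) * ((adj A * B) *\<^sub>v v) $ k)"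
  proof (rule sum.cong)
    show "{0..<m} = {..<m}" by auto
  next
    fix k assume k: "k \<in> {..<m}"
    have "((adj A * B) *\<^sub>v v) $ k = (adj A *\<^sub>v (B *\<^sub>v v)) $ k" using d by (simp add: mv_assoc)
    also have "\<dots> = (\<Sum>i\<in>{0..<m}. adj A $$ (k,i) * (B *\<^sub>v v) $ i)" using d k by (subst multv_entry) auto
    also have "\<dots> = (\<Sum>i<m. cnj (A $$ (i,k)) * (B *\<^sub>v v) $ i)" using d k by (intro sum.cong) auto
    finally show "(\<Sum>i<m. cnj (u $ k) * (cnj (A $$ (i,k)) * (B *\<^sub>v v) $ i)) = cnj (u $ k) * ((adj A * B) *\<^sub>v v) $ k"
      by (simp add: sum_distrib_left)
  qed
  also have "\<dots> = herm u (adj A * B) v" unfolding herm_def using d by simp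
  finally show ?thesis .
qed

lemma herm_entry: assumes d: "dim_row Y = m" "dim_row B = m" "dim_col B = m" and ij: "i < dim_col Y" "j < dim_col Y"
  shows "(adj Y * B * Y) $$ (i,j) = herm (col Y i) B (col Y j)"
proof -
  have "(adj Y * B * Y) $$ (i,j) = (adj Y * (B * Y)) $$ (i,j)" using d by (simp add: ma_assoc)
  also have "\<dots> = (\<Sum>k\<in>{0..<m}. adj Y $$ (i,k) * (B * Y) $$ (k,j))" using d ij by (subst mult_entry) auto
  also have "\<dots> = (\<Sum>k<m. cnj (col Y i $ k) * (B *\<^sub>v col Y j) $ k)"
    using d ij by (intro sum.cong) auto
  also have "\<dots> = herm (col Y i) B (col Y j)" unfolding herm_def using d by simp
  finally show ?thesis .
qed

lemma herm_vec_entry: assumes d: "dim_row Y = m" "dim_row B = m" "dim_col B = m" "dim_vec v = m" and i: "i < dim_col Y"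
  shows "(adj Y *\<^sub>v (B *\<^sub>v v)) $ i = herm (col Y i) B v"
proof -
  have "(adj Y *\<^sub>v (B *\<^sub>v v)) $ i = (\<Sum>k\<in>{0..<m}. adj Y $$ (i,k) * (B *\<^sub>v v) $ k)" using d i by (subst multv_entry) auto
  also have "\<dots> = (\<Sum>k<m. cnj (col Y i $ k) * (B *\<^sub>v v) $ k)"
    using d i by (intro sum.cong) auto
  also have "\<dots> = herm (col Y i) B v" unfolding herm_def using d by simp
  finally show ?thesis .
qed


section \<open>Generic derivative lemmas for Y, M, Omega\<close>

lemma Y_der: assumes Pd: "\<forall>j<n. vder (Ps j) (Pd j) x" and dP: "\<forall>j<n. dim_vec (Pd j) = m"
  shows "mder (\<lambda>y. mat_of_cols m (map (\<lambda>j. Ps j y) [0..<n])) (mat_of_cols m (map Pd [0..<n])) x"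
  unfolding mder_def
proof (intro conjI allI impI)
  fix y show "dim_row (mat_of_cols m (map (\<lambda>j. Ps j y) [0..<n])) = dim_row (mat_of_cols m (map Pd [0..<n]))"
    "dim_col (mat_of_cols m (map (\<lambda>j. Ps j y) [0..<n])) = dim_col (mat_of_cols m (map Pd [0..<n]))" by auto
next
  fix i j assume i: "i < dim_row (mat_of_cols m (map Pd [0..<n]))" and j: "j < dim_col (mat_of_cols m (map Pd [0..<n]))"
  then have i': "i < m" and j': "j < n" by auto
  have e: "(\<lambda>y. mat_of_cols m (map (\<lambda>j. Ps j y) [0..<n]) $$ (i,j)) = (\<lambda>y. Ps j y $ i)"
    using i' j' by (intro ext) (simp add: mat_of_cols_index)
  have r: "mat_of_cols m (map Pd [0..<n]) $$ (i,j) = Pd j $ i" using i' j' by (simp add: mat_of_cols_index)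
  show "((\<lambda>y. mat_of_cols m (map (\<lambda>j. Ps j y) [0..<n]) $$ (i,j)) has_vector_derivative mat_of_cols m (map Pd [0..<n]) $$ (i,j)) (at x)"
    unfolding e r using Pd dP i' j' by (auto simp: vder_def)
qed

lemma herm_pair_der:
  assumes u: "vder u (A *\<^sub>v u x) x" and v: "vder v (B *\<^sub>v v x) x"
    and du: "\<And>y. dim_vec (u y) = m" and dv: "\<And>y. dim_vec (v y) = m"
    and dA: "A \<in> carrier_mat m m" and dB: "B \<in> carrier_mat m m" and dL: "L \<in> carrier_mat m m" and dW: "W \<in> carrier_mat m m"
    and id: "adj A * L + L * B = c \<cdot>\<^sub>m W" and c: "c \<noteq> 0"
  shows "((\<lambda>y. herm (u y) L (v y) / c) has_vector_derivative herm (u x) W (v x)) (at x)"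
proof -
  have "((\<lambda>y. herm (u y) L (v y)) has_vector_derivative (herm (A *\<^sub>v u x) L (v x) + herm (u x) L (B *\<^sub>v v x))) (at x)"
    by (rule herm_der[OF u v]) (use dA dB dL dv in auto)
  moreover have "herm (A *\<^sub>v u x) L (v x) + herm (u x) L (B *\<^sub>v v x) = c * herm (u x) W (v x)"
  proof -
    have "herm (A *\<^sub>v u x) L (v x) = herm (u x) (adj A * L) (v x)"
      by (rule herm_mult_left[where m=m]) (use dA dL du dv in auto)
    moreover have "herm (u x) L (B *\<^sub>v v x) = herm (u x) (L * B) (v x)"
      by (rule herm_mult_right) (use dL dB dv in auto)
    moreover have "herm (u x) (adj A * L) (v x) + herm (u x) (L * B) (v x) = herm (u x) (adj A * L + L * B) (v x)"
      by (rule herm_add[symmetric]) (use dA dL dB du dv in auto)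
    moreover have "herm (u x) (c \<cdot>\<^sub>m W) (v x) = c * herm (u x) W (v x)"
      by (rule herm_smult) (use dW du dv in auto)
    ultimately show ?thesis using id by simp
  qed
  ultimately have "((\<lambda>y. herm (u y) L (v y)) has_vector_derivative c * herm (u x) W (v x)) (at x)" by simp
  from has_vector_derivative_divide[OF this, of c] c show ?thesis by simp
qed

lemma M_der:
  fixes Ps :: "nat \<Rightarrow> real \<Rightarrow> complex vec"
  assumes Pd: "\<forall>j<n. vder (Ps j) (A j *\<^sub>v Ps j x) x"
   and dA: "\<forall>j<n. A j \<in> carrier_mat m m" and dP: "\<forall>j<n. \<forall>y. dim_vec (Ps j y) = m"
   and dL: "L \<in> carrier_mat m m"
   and dW: "\<forall>i<n. \<forall>j<n. W i j \<in> carrier_mat m m"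
   and Aid: "\<forall>i<n. \<forall>j<n. adj (A i) * L + L * A j = (\<i> * (lam j - cnj (lam i))) \<cdot>\<^sub>m W i j"
   and Mf: "\<forall>y. Mf y = mat n n (\<lambda>(i,j). if i = j \<and> lam i \<in> \<real> then complex_of_real (Md i y)
        else herm (Ps i y) L (Ps j y) / (\<i> * (lam j - cnj (lam i))))"
   and nz: "\<forall>i<n. \<forall>j<n. \<not>(i = j \<and> lam i \<in> \<real>) \<longrightarrow> lam j \<noteq> cnj (lam i)"
   and rd: "\<forall>i<n. lam i \<in> \<real> \<longrightarrow> ((\<lambda>y. complex_of_real (Md i y)) has_vector_derivative herm (Ps i x) (W i i) (Ps i x)) (at x)"
  shows "mder Mf (mat n n (\<lambda>(i,j). herm (Ps i x) (W i j) (Ps j x))) x"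
  unfolding mder_def
proof (intro conjI allI impI)
  fix y show "dim_row (Mf y) = dim_row (mat n n (\<lambda>(i,j). herm (Ps i x) (W i j) (Ps j x)))"
    "dim_col (Mf y) = dim_col (mat n n (\<lambda>(i,j). herm (Ps i x) (W i j) (Ps j x)))" using Mf by auto
next
  fix i j assume i: "i < dim_row (mat n n (\<lambda>(i,j). herm (Ps i x) (W i j) (Ps j x)))"
    and j: "j < dim_col (mat n n (\<lambda>(i,j). herm (Ps i x) (W i j) (Ps j x)))"
  then have i': "i < n" and j': "j < n" by auto
  have r: "mat n n (\<lambda>(i,j). herm (Ps i x) (W i j) (Ps j x)) $$ (i,j) = herm (Ps i x) (W i j) (Ps j x)"
    using i' j' by simp
  have "((\<lambda>y. Mf y $$ (i,j)) has_vector_derivative herm (Ps i x) (W i j) (Ps j x)) (at x)"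
  proof (cases "i = j \<and> lam i \<in> \<real>")
    case True
    have e: "(\<lambda>y. Mf y $$ (i,j)) = (\<lambda>y. complex_of_real (Md i y))" using True i' j' Mf by (intro ext) auto
    show ?thesis unfolding e using rd True i' by auto
  next
    case False
    have e: "(\<lambda>y. Mf y $$ (i,j)) = (\<lambda>y. herm (Ps i y) L (Ps j y) / (\<i> * (lam j - cnj (lam i))))"
      using False i' j' Mf by (intro ext) auto
    have c: "\<i> * (lam j - cnj (lam i)) \<noteq> 0" using nz False i' j' by auto
    show ?thesis unfolding e
      by (rule herm_pair_der[where m=m and A="A i" and B="A j"]) (use Pd dA dP dL dW Aid c i' j' in auto)
  qed
  then show "((\<lambda>y. Mf y $$ (i,j)) has_vector_derivative mat n n (\<lambda>(i,j). herm (Ps i x) (W i j) (Ps j x)) $$ (i,j)) (at x)"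
    unfolding r .
qed

lemma Om_der:
  fixes Ps :: "nat \<Rightarrow> real \<Rightarrow> complex vec"
  assumes Pd: "\<forall>j<n. vder (Ps j) (A j *\<^sub>v Ps j x) x"
   and dA: "\<forall>j<n. A j \<in> carrier_mat m m" and dP: "\<forall>j<n. \<forall>y. dim_vec (Ps j y) = m"
   and P0d: "vder Pf (Az *\<^sub>v Pf x) x" and dA0: "Az \<in> carrier_mat m m" and dP0: "\<forall>y. dim_vec (Pf y) = m"
   and dL: "L \<in> carrier_mat m m"
   and dW: "\<forall>i<n. W i \<in> carrier_mat m m"
   and Aid: "\<forall>i<n. adj (A i) * L + L * Az = (\<i> * (lamz - cnj (lam i))) \<cdot>\<^sub>m W i"
   and Omf: "\<forall>y. Omf y = vec n (\<lambda>i. herm (Ps i y) L (Pf y) / (\<i> * (lamz - cnj (lam i))))"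
   and nz: "\<forall>i<n. lamz \<noteq> cnj (lam i)"
  shows "vder Omf (vec n (\<lambda>i. herm (Ps i x) (W i) (Pf x))) x"
  unfolding vder_def
proof (intro conjI allI impI)
  fix y show "dim_vec (Omf y) = dim_vec (vec n (\<lambda>i. herm (Ps i x) (W i) (Pf x)))" using Omf by auto
next
  fix i assume i: "i < dim_vec (vec n (\<lambda>i. herm (Ps i x) (W i) (Pf x)))"
  then have i': "i < n" by auto
  have r: "vec n (\<lambda>i. herm (Ps i x) (W i) (Pf x)) $ i = herm (Ps i x) (W i) (Pf x)" using i' by simp
  have e: "(\<lambda>y. Omf y $ i) = (\<lambda>y. herm (Ps i y) L (Pf y) / (\<i> * (lamz - cnj (lam i))))"
    using i' Omf by (intro ext) simp
  have c: "\<i> * (lamz - cnj (lam i)) \<noteq> 0" using nz i' by auto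
  show "((\<lambda>y. Omf y $ i) has_vector_derivative vec n (\<lambda>i. herm (Ps i x) (W i) (Pf x)) $ i) (at x)"
    unfolding r e
    by (rule herm_pair_der[where m=m and A="A i" and B="Az"]) (use Pd dA dP P0d dA0 dP0 dL dW Aid c i' in auto)
qed




definition Dm :: "nat \<Rightarrow> (nat \<Rightarrow> complex) \<Rightarrow> complex mat" where
  "Dm n f = mat n n (\<lambda>(i,j). if i = j then f i else 0)"

lemma Dm_dims[simp]: "dim_row (Dm n f) = n" "dim_col (Dm n f) = n" by (auto simp: Dm_def)

lemma Dm_entry: "i < n \<Longrightarrow> j < n \<Longrightarrow> Dm n f $$ (i,j) = (if i = j then f i else 0)" by (auto simp: Dm_def)

lemma sum_single: fixes f :: "nat \<Rightarrow> complex" shows "i < m \<Longrightarrow> (\<Sum>k\<in>{0..<m}. (if k = i then c else 0) * f k) = c * f i"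
proof -
  assume i: "i < m"
  have "(\<Sum>k\<in>{0..<m}. (if k = i then c else 0) * f k) = (\<Sum>k\<in>{0..<m}. if k = i then c * f i else 0)"
    by (intro sum.cong) auto
  then show ?thesis using i by simp
qed

lemma sum_single': fixes f :: "nat \<Rightarrow> complex" shows "j < m \<Longrightarrow> (\<Sum>k\<in>{0..<m}. f k * (if k = j then c else 0)) = f j * c"
proof -
  assume i: "j < m"
  have "(\<Sum>k\<in>{0..<m}. f k * (if k = j then c else 0)) = (\<Sum>k\<in>{0..<m}. if k = j then f j * c else 0)"
    by (intro sum.cong) auto
  then show ?thesis using i by simp
qed

lemma diag_left: fixes D A :: "complex mat" assumes D: "dim_row D = m" "dim_col D = m" and dg: "\<And>i j. i < m \<Longrightarrow> j < m \<Longrightarrow> i \<noteq> j \<Longrightarrow> D $$ (i,j) = 0"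
  and A: "dim_row A = m" and ij: "i < m" "j < dim_col A"
  shows "(D * A) $$ (i,j) = D $$ (i,i) * A $$ (i,j)"
proof -
  have "(D * A) $$ (i,j) = (\<Sum>k\<in>{0..<m}. D $$ (i,k) * A $$ (k,j))" using D A ij by (subst mult_entry) auto
  also have "\<dots> = (\<Sum>k\<in>{0..<m}. (if k = i then D $$ (i,i) else 0) * A $$ (k,j))"
    using dg ij by (intro sum.cong) auto
  also have "\<dots> = D $$ (i,i) * A $$ (i,j)" by (rule sum_single[OF ij(1)])
  finally show ?thesis .
qed

lemma diag_right: fixes D A :: "complex mat" assumes D: "dim_row D = m" "dim_col D = m" and dg: "\<And>i j. i < m \<Longrightarrow> j < m \<Longrightarrow> i \<noteq> j \<Longrightarrow> D $$ (i,j) = 0"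
  and A: "dim_col A = m" and ij: "i < dim_row A" "j < m"
  shows "(A * D) $$ (i,j) = A $$ (i,j) * D $$ (j,j)"
proof -
  have "(A * D) $$ (i,j) = (\<Sum>k\<in>{0..<m}. A $$ (i,k) * D $$ (k,j))" using D A ij by (subst mult_entry) auto
  also have "\<dots> = (\<Sum>k\<in>{0..<m}. A $$ (i,k) * (if k = j then D $$ (j,j) else 0))"
    using dg ij by (intro sum.cong) auto
  also have "\<dots> = A $$ (i,j) * D $$ (j,j)" by (rule sum_single'[OF ij(2)])
  finally show ?thesis .
qed

lemma s_dims[simp]: "dim_row (sigma3 N) = N+1" "dim_col (sigma3 N) = N+1"
  and L_dims[simp]: "dim_row (LambdaM N k) = N+1" "dim_col (LambdaM N k) = N+1"
  and Q_dims[simp]: "dim_row (Qmat N k q x t) = N+1" "dim_col (Qmat N k q x t) = N+1"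
  by (auto simp: sigma3_def LambdaM_def Qmat_def)

lemma s_diag: "i < N+1 \<Longrightarrow> j < N+1 \<Longrightarrow> i \<noteq> j \<Longrightarrow> sigma3 N $$ (i,j) = 0"
  and L_diag: "i < N+1 \<Longrightarrow> j < N+1 \<Longrightarrow> i \<noteq> j \<Longrightarrow> LambdaM N k $$ (i,j) = 0"
  and Dm_diag: "i < n \<Longrightarrow> j < n \<Longrightarrow> i \<noteq> j \<Longrightarrow> Dm n f $$ (i,j) = 0"
  by (auto simp: sigma3_def LambdaM_def Dm_def)

lemma sgnS_cnj[simp]: "cnj (sgnS k l) = sgnS k l" by (simp add: sgnS_def)
lemma sgnS_sq: "sgnS k l * sgnS k l = 1" by (simp add: sgnS_def)

lemma adj_s: "adj (sigma3 N) = sigma3 N"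
  by (rule eq_matI) (auto simp: sigma3_def adj_def)

lemma adj_L: "adj (LambdaM N k) = LambdaM N k"
  by (rule eq_matI) (auto simp: LambdaM_def adj_def)

lemma adj_Dm: "adj (Dm n f) = Dm n (\<lambda>i. cnj (f i))"
  by (rule eq_matI) (auto simp: Dm_def adj_def)

lemma ss_one: "sigma3 N * sigma3 N = 1\<^sub>m (N+1)"
  apply (rule eq_matI) apply (simp_all del: index_mult_mat add: diag_left[OF s_dims s_diag]  ma_dims) apply (auto simp: sigma3_def) done

lemma sL_comm: "sigma3 N * LambdaM N k = LambdaM N k * sigma3 N"
  apply (rule eq_matI) apply (simp_all del: index_mult_mat add: diag_left[OF s_dims s_diag] diag_right[OF s_dims s_diag]  ma_dims) apply (auto simp: sigma3_def LambdaM_def) done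

lemma Qs_anti: "Qmat N k q x t * sigma3 N = - (sigma3 N * Qmat N k q x t)"
  apply (rule eq_matI) apply (simp_all del: index_mult_mat add: diag_left[OF s_dims s_diag] diag_right[OF s_dims s_diag]  ma_dims) apply (auto simp: sigma3_def Qmat_def) done

lemma adjQ_L: "adj (Qmat N k q x t) * LambdaM N k = LambdaM N k * Qmat N k q x t"
  apply (rule eq_matI) apply (simp_all del: index_mult_mat add: diag_left[OF L_dims L_diag] diag_right[OF L_dims L_diag]  ma_dims) apply (auto simp: LambdaM_def Qmat_def adj_def
       sgnS_sq mult.commute mult.left_commute) done

lemma Dm_mult: "Dm n f * Dm n g = Dm n (\<lambda>i. f i * g i)"
  apply (rule eq_matI) apply (simp_all del: index_mult_mat add: diag_left[OF Dm_dims Dm_diag]  ma_dims) apply (auto simp: Dm_def) done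

lemma Dm_smult: "c \<cdot>\<^sub>m Dm n f = Dm n (\<lambda>i. c * f i)"
  by (rule eq_matI) (auto simp: Dm_def)


lemma AY_entry: assumes dA: "dim_col A = m" and df: "\<forall>j<n. dim_vec (f j) = m" and r: "r < dim_row A" and j: "j < n"
  shows "(A * mat_of_cols m (map f [0..<n])) $$ (r,j) = (A *\<^sub>v f j) $ r"
proof -
  have fj: "f j \<in> carrier_vec m" unfolding carrier_vec_def using df j by blast
  have c: "col (mat_of_cols m (map f [0..<n])) j = f j"
    using col_mat_of_cols[of j "map f [0..<n]" m] fj j by simp
  have "(A * mat_of_cols m (map f [0..<n])) $$ (r,j) = row A r \<bullet> col (mat_of_cols m (map f [0..<n])) j"
    using r j by simp
  also have "\<dots> = (A *\<^sub>v f j) $ r" unfolding c using r by simp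
  finally show ?thesis .
qed

lemma cols_lin2: fixes A C :: "complex mat"
  assumes dA: "A \<in> carrier_mat m m" and dC: "C \<in> carrier_mat m m" and df: "\<forall>j<n. dim_vec (f j) = m"
  shows "mat_of_cols m (map (\<lambda>j. (a j \<cdot>\<^sub>m A + C) *\<^sub>v f j) [0..<n])
     = A * mat_of_cols m (map f [0..<n]) * Dm n a + C * mat_of_cols m (map f [0..<n])"
proof (rule eq_matI)
  fix r j assume r: "r < dim_row (A * mat_of_cols m (map f [0..<n]) * Dm n a + C * mat_of_cols m (map f [0..<n]))"
    and j: "j < dim_col (A * mat_of_cols m (map f [0..<n]) * Dm n a + C * mat_of_cols m (map f [0..<n]))"
  have r': "r < m" and j': "j < n" using r j dA dC by auto
  have "mat_of_cols m (map (\<lambda>j. (a j \<cdot>\<^sub>m A + C) *\<^sub>v f j) [0..<n]) $$ (r,j) = ((a j \<cdot>\<^sub>m A + C) *\<^sub>v f j) $ r"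
    using r' j' by (simp add: mat_of_cols_index)
  also have "(a j \<cdot>\<^sub>m A + C) *\<^sub>v f j = a j \<cdot>\<^sub>v (A *\<^sub>v f j) + C *\<^sub>v f j"
    using dA dC df j' by (simp add: mv_distR mv_smultL)
  also have "(a j \<cdot>\<^sub>v (A *\<^sub>v f j) + C *\<^sub>v f j) $ r = a j * (A *\<^sub>v f j) $ r + (C *\<^sub>v f j) $ r"
    using dA dC r' by (simp del: index_mult_mat_vec)
  also have "\<dots> = (A * mat_of_cols m (map f [0..<n]) * Dm n a + C * mat_of_cols m (map f [0..<n])) $$ (r,j)"
  proof -
    have "(A * mat_of_cols m (map f [0..<n]) * Dm n a) $$ (r,j) = (A * mat_of_cols m (map f [0..<n])) $$ (r,j) * Dm n a $$ (j,j)"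
      by (rule diag_right[OF Dm_dims Dm_diag]) (use dA r' j' in auto)
    moreover have "(A * mat_of_cols m (map f [0..<n])) $$ (r,j) = (A *\<^sub>v f j) $ r"
      by (rule AY_entry) (use dA df r' j' in auto)
    moreover have "(C * mat_of_cols m (map f [0..<n])) $$ (r,j) = (C *\<^sub>v f j) $ r"
      by (rule AY_entry) (use dC df r' j' in auto)
    ultimately show ?thesis using r' j' dA dC by (simp del: index_mult_mat index_mult_mat_vec add: ma_dims Dm_entry mult.commute)
  qed
  finally show "mat_of_cols m (map (\<lambda>j. (a j \<cdot>\<^sub>m A + C) *\<^sub>v f j) [0..<n]) $$ (r,j) =
     (A * mat_of_cols m (map f [0..<n]) * Dm n a + C * mat_of_cols m (map f [0..<n])) $$ (r,j)" .
qed (use dA dC in auto)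

lemma cols_lin3: fixes A B C :: "complex mat"
  assumes dA: "A \<in> carrier_mat m m" and dB: "B \<in> carrier_mat m m" and dC: "C \<in> carrier_mat m m" and df: "\<forall>j<n. dim_vec (f j) = m"
  shows "mat_of_cols m (map (\<lambda>j. (a j \<cdot>\<^sub>m A + b j \<cdot>\<^sub>m B - C) *\<^sub>v f j) [0..<n])
     = A * mat_of_cols m (map f [0..<n]) * Dm n a + B * mat_of_cols m (map f [0..<n]) * Dm n b - C * mat_of_cols m (map f [0..<n])"
proof (rule eq_matI)
  fix r j assume r: "r < dim_row (A * mat_of_cols m (map f [0..<n]) * Dm n a + B * mat_of_cols m (map f [0..<n]) * Dm n b - C * mat_of_cols m (map f [0..<n]))"
    and j: "j < dim_col (A * mat_of_cols m (map f [0..<n]) * Dm n a + B * mat_of_cols m (map f [0..<n]) * Dm n b - C * mat_of_cols m (map f [0..<n]))"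
  have r': "r < m" and j': "j < n" using r j dA dC by auto
  have "mat_of_cols m (map (\<lambda>j. (a j \<cdot>\<^sub>m A + b j \<cdot>\<^sub>m B - C) *\<^sub>v f j) [0..<n]) $$ (r,j) = ((a j \<cdot>\<^sub>m A + b j \<cdot>\<^sub>m B - C) *\<^sub>v f j) $ r"
    using r' j' by (simp add: mat_of_cols_index)
  also have "(a j \<cdot>\<^sub>m A + b j \<cdot>\<^sub>m B - C) *\<^sub>v f j = a j \<cdot>\<^sub>v (A *\<^sub>v f j) + b j \<cdot>\<^sub>v (B *\<^sub>v f j) + (-1) \<cdot>\<^sub>v (C *\<^sub>v f j)"
    using dA dB dC df j' by (simp add: mv_distR mv_smultL ma_minus)
  also have "(a j \<cdot>\<^sub>v (A *\<^sub>v f j) + b j \<cdot>\<^sub>v (B *\<^sub>v f j) + (-1) \<cdot>\<^sub>v (C *\<^sub>v f j)) $ r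
      = a j * (A *\<^sub>v f j) $ r + b j * (B *\<^sub>v f j) $ r - (C *\<^sub>v f j) $ r"
    using dA dB dC r' by (simp del: index_mult_mat_vec)
  also have "\<dots> = (A * mat_of_cols m (map f [0..<n]) * Dm n a + B * mat_of_cols m (map f [0..<n]) * Dm n b - C * mat_of_cols m (map f [0..<n])) $$ (r,j)"
  proof -
    have "(A * mat_of_cols m (map f [0..<n]) * Dm n a) $$ (r,j) = (A * mat_of_cols m (map f [0..<n])) $$ (r,j) * Dm n a $$ (j,j)"
      by (rule diag_right[OF Dm_dims Dm_diag]) (use dA r' j' in auto)
    moreover have "(B * mat_of_cols m (map f [0..<n]) * Dm n b) $$ (r,j) = (B * mat_of_cols m (map f [0..<n])) $$ (r,j) * Dm n b $$ (j,j)"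
      by (rule diag_right[OF Dm_dims Dm_diag]) (use dB r' j' in auto)
    moreover have "(A * mat_of_cols m (map f [0..<n])) $$ (r,j) = (A *\<^sub>v f j) $ r"
      by (rule AY_entry) (use dA df r' j' in auto)
    moreover have "(B * mat_of_cols m (map f [0..<n])) $$ (r,j) = (B *\<^sub>v f j) $ r"
      by (rule AY_entry) (use dB df r' j' in auto)
    moreover have "(C * mat_of_cols m (map f [0..<n])) $$ (r,j) = (C *\<^sub>v f j) $ r"
      by (rule AY_entry) (use dC df r' j' in auto)
    ultimately show ?thesis using r' j' dA dB dC by (simp del: index_mult_mat index_mult_mat_vec add: ma_dims Dm_entry mult.commute)
  qed
  finally show "mat_of_cols m (map (\<lambda>j. (a j \<cdot>\<^sub>m A + b j \<cdot>\<^sub>m B - C) *\<^sub>v f j) [0..<n]) $$ (r,j) =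
     (A * mat_of_cols m (map f [0..<n]) * Dm n a + B * mat_of_cols m (map f [0..<n]) * Dm n b - C * mat_of_cols m (map f [0..<n])) $$ (r,j)" .
qed (use dA dC in auto)


definition dq :: "(real \<Rightarrow> real \<Rightarrow> nat \<Rightarrow> complex) \<Rightarrow> real \<Rightarrow> real \<Rightarrow> nat \<Rightarrow> complex" where
  "dq q x t l = vector_derivative (\<lambda>y. q y t l) (at x)"

lemma Q_der: assumes qd: "\<forall>l<N. (\<lambda>y. q y t l) differentiable (at x)"
  shows "mder (\<lambda>y. Qmat N k q y t) (Qmat N k (dq q) x t) x"
  unfolding mder_def
proof (intro conjI allI impI)
  fix y show "dim_row (Qmat N k q y t) = dim_row (Qmat N k (dq q) x t)" "dim_col (Qmat N k q y t) = dim_col (Qmat N k (dq q) x t)"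
    by simp_all
next
  fix i j assume i: "i < dim_row (Qmat N k (dq q) x t)" and j: "j < dim_col (Qmat N k (dq q) x t)"
  then have i': "i < N+1" and j': "j < N+1" by auto
  have hd: "((\<lambda>y. q y t l) has_vector_derivative dq q x t l) (at x)" if "l < N" for l
    using qd that unfolding dq_def by (simp add: vector_derivative_works[symmetric])
  show "((\<lambda>y. Qmat N k q y t $$ (i, j)) has_vector_derivative Qmat N k (dq q) x t $$ (i, j)) (at x)"
  proof (cases "i = 0 \<and> j \<ge> 1")
    case True
    have e: "(\<lambda>y. Qmat N k q y t $$ (i, j)) = (\<lambda>y. - cnj (q y t (j - 1)) * sgnS k (j - 1))"
      using True i' j' by (intro ext) (simp add: Qmat_def)
    have r: "Qmat N k (dq q) x t $$ (i, j) = - cnj (dq q x t (j - 1)) * sgnS k (j - 1)"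
      using True i' j' by (simp add: Qmat_def)
    show ?thesis unfolding e r using hd[of "j-1"] True j'
      by (auto intro!: has_vector_derivative_mult_left has_vector_derivative_minus has_vector_derivative_cnj)
  next
    case F1: False
    show ?thesis
    proof (cases "i \<ge> 1 \<and> j = 0")
      case True
      have e: "(\<lambda>y. Qmat N k q y t $$ (i, j)) = (\<lambda>y. q y t (i - 1))"
        using F1 True i' j' by (intro ext) (simp add: Qmat_def)
      have r: "Qmat N k (dq q) x t $$ (i, j) = dq q x t (i - 1)"
        using F1 True i' j' by (simp add: Qmat_def)
      show ?thesis unfolding e r using hd[of "i-1"] True i' by auto
    next
      case False
      have e: "(\<lambda>y. Qmat N k q y t $$ (i, j)) = (\<lambda>y. 0)"
        using F1 False i' j' by (intro ext) (auto simp: Qmat_def)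
      have r: "Qmat N k (dq q) x t $$ (i, j) = 0"
        using F1 False i' j' by (auto simp: Qmat_def)
      show ?thesis unfolding e r by simp
    qed
  qed
qed

lemma mder_mdx: assumes "mder (\<lambda>y. F y t) G x" shows "mdx F x t = G" "mdiff_x F x t"
proof -
  show "mdx F x t = G" unfolding mdx_def
    using assms unfolding mder_def by (intro eq_matI) (auto simp: vector_derivative_at)
  show "mdiff_x F x t" unfolding mdiff_x_def
    using assms unfolding mder_def by (auto intro: differentiableI_vector)
qed

lemma vder_vhas_dx: "vder (\<lambda>y. F y t) G x \<Longrightarrow> vhas_dx F G x t"
  unfolding vder_def vhas_dx_def by auto

lemma vhas_dx_vder: "vhas_dx F G x t \<Longrightarrow> vder (\<lambda>y. F y t) G x"
  unfolding vder_def vhas_dx_def by auto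

lemma vder_vhas_dt: "vder (\<lambda>s. F x s) G t \<Longrightarrow> vhas_dt F G x t"
  unfolding vder_def vhas_dt_def by auto

lemma vhas_dt_vder: "vhas_dt F G x t \<Longrightarrow> vder (\<lambda>s. F x s) G t"
  unfolding vder_def vhas_dt_def by auto


lemma adj_add: "dim_row A = dim_row B \<Longrightarrow> dim_col A = dim_col B \<Longrightarrow> adj (A + B) = adj A + adj B"
  by (rule eq_matI) (auto simp: adj_def)

lemma adj_minus: "dim_row A = dim_row B \<Longrightarrow> dim_col A = dim_col B \<Longrightarrow> adj (A - B) = adj A - adj B"
  by (rule eq_matI) (auto simp: adj_def)

lemma adj_smult: "adj (c \<cdot>\<^sub>m A) = cnj c \<cdot>\<^sub>m adj A"
  by (rule eq_matI) (auto simp: adj_def)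

lemma adj_mult: assumes "dim_col A = dim_row B" shows "adj (A * B) = adj B * adj A"
proof (rule eq_matI)
  fix i j assume i: "i < dim_row (adj B * adj A)" and j: "j < dim_col (adj B * adj A)"
  have i': "i < dim_col B" and j': "j < dim_row A" using i j by auto
  have "adj (A * B) $$ (i,j) = cnj ((A * B) $$ (j,i))" using i' j' by (simp del: index_mult_mat add: adj_index ma_dims)
  also have "\<dots> = cnj (\<Sum>k\<in>{0..<dim_col A}. A $$ (j,k) * B $$ (k,i))"
    using i' j' assms by (simp add: mult_entry del: index_mult_mat)
  also have "\<dots> = (\<Sum>k\<in>{0..<dim_col A}. adj B $$ (i,k) * adj A $$ (k,j))"
    using i' j' assms by (simp add: mult.commute)
  also have "\<dots> = (adj B * adj A) $$ (i,j)" using i' j' assms by (subst mult_entry) auto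
  finally show "adj (A * B) $$ (i,j) = (adj B * adj A) $$ (i,j)" .
qed auto

lemma Dm_multv: "i < n \<Longrightarrow> dim_vec v = n \<Longrightarrow> (Dm n f *\<^sub>v v) $ i = f i * v $ i"
proof -
  assume i: "i < n" and v: "dim_vec v = n"
  have "(Dm n f *\<^sub>v v) $ i = (\<Sum>k\<in>{0..<n}. Dm n f $$ (i,k) * v $ k)" using i v by (subst multv_entry) auto
  also have "\<dots> = (\<Sum>k\<in>{0..<n}. (if k = i then f i else 0) * v $ k)" using i by (intro sum.cong) (auto simp: Dm_entry)
  also have "\<dots> = f i * v $ i" using i by (rule sum_single)
  finally show ?thesis .
qed

lemma Aid_x:
  fixes a b :: complex and N k :: nat and q :: "real \<Rightarrow> real \<Rightarrow> nat \<Rightarrow> complex" and x t :: real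
  defines "s \<equiv> sigma3 N" and "L \<equiv> LambdaM N k" and "Q \<equiv> Qmat N k q x t"
  shows "adj ((\<i>*a) \<cdot>\<^sub>m s + \<i> \<cdot>\<^sub>m Q) * L + L * ((\<i>*b) \<cdot>\<^sub>m s + \<i> \<cdot>\<^sub>m Q) = (\<i> * (b - cnj a)) \<cdot>\<^sub>m (L * s)"
proof -
  have d: "dim_row s = N+1" "dim_col s = N+1" "dim_row L = N+1" "dim_col L = N+1" "dim_row Q = N+1" "dim_col Q = N+1"
    unfolding s_def L_def Q_def by simp_all
  have sL: "s * L = L * s" unfolding s_def L_def by (rule sL_comm)
  have sl1: "s * (L * X) = L * (s * X)" if "dim_row X = N+1" for X
    using that by (simp add: d ma_dims sL flip: ma_assoc)
  have ql1: "adj Q * (L * X) = L * (Q * X)" if "dim_row X = N+1" for X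
    using that unfolding Q_def L_def by (simp add: ma_dims adjQ_L flip: ma_assoc)
  have sL: "s * L = L * s" unfolding s_def L_def by (rule sL_comm)
  have qL: "adj Q * L = L * Q" unfolding Q_def L_def by (rule adjQ_L)
  have as: "adj s = s" unfolding s_def by (rule adj_s)
  show ?thesis
    apply (simp only: d ma_simps ma_dims adj_dims adj_add adj_smult adj_mult as sl1 ql1 sL qL)
    apply (rule ma_entries_eqI)
      apply (simp_all only: d ma_dims adj_dims)
    apply (simp only: d ma_dims ma_idx adj_dims)
    apply (simp add: algebra_simps del: index_mult_mat)
    done
qed

lemma Aid_t:
  fixes a b :: complex and N k :: nat and q q' :: "real \<Rightarrow> real \<Rightarrow> nat \<Rightarrow> complex" and x t :: real
  defines "s \<equiv> sigma3 N" and "L \<equiv> LambdaM N k" and "Q \<equiv> Qmat N k q x t" and "Qx \<equiv> Qmat N k q' x t"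
  defines "V \<equiv> \<lambda>c. (\<i>*c^2) \<cdot>\<^sub>m s + (\<i>*c) \<cdot>\<^sub>m Q - (1/2) \<cdot>\<^sub>m (\<i> \<cdot>\<^sub>m (s * (Q * Q)) - s * Qx)"
  shows "adj (V a) * L + L * V b = (\<i> * (b - cnj a)) \<cdot>\<^sub>m ((b + cnj a) \<cdot>\<^sub>m (L * s) + L * Q)"
proof -
  have d: "dim_row s = N+1" "dim_col s = N+1" "dim_row L = N+1" "dim_col L = N+1" "dim_row Q = N+1" "dim_col Q = N+1"
     "dim_row Qx = N+1" "dim_col Qx = N+1"
    unfolding s_def L_def Q_def Qx_def by simp_all
  have sL: "s * L = L * s" unfolding s_def L_def by (rule sL_comm)
  have sl1: "s * (L * X) = L * (s * X)" if "dim_row X = N+1" for X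
    using that by (simp add: d ma_dims sL flip: ma_assoc)
  have ql1: "adj Q * (L * X) = L * (Q * X)" if "dim_row X = N+1" for X
    using that unfolding Q_def L_def by (simp add: ma_dims adjQ_L flip: ma_assoc)
  have qxl1: "adj Qx * (L * X) = L * (Qx * X)" if "dim_row X = N+1" for X
    using that unfolding Qx_def L_def by (simp add: ma_dims adjQ_L flip: ma_assoc)
  have qs1: "Q * (s * X) = (-1) \<cdot>\<^sub>m (s * (Q * X))" if "dim_row X = N+1" for X
    using that unfolding Q_def s_def by (simp add: ma_dims Qs_anti ma_simps flip: ma_assoc)
  have qxs1: "Qx * (s * X) = (-1) \<cdot>\<^sub>m (s * (Qx * X))" if "dim_row X = N+1" for X
    using that unfolding Qx_def s_def by (simp add: ma_dims Qs_anti ma_simps flip: ma_assoc)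
  have qs0: "Q * s = (-1) \<cdot>\<^sub>m (s * Q)" unfolding Q_def s_def by (simp add: Qs_anti ma_uminus)
  have qxs0: "Qx * s = (-1) \<cdot>\<^sub>m (s * Qx)" unfolding Qx_def s_def by (simp add: Qs_anti ma_uminus)
  have sL: "s * L = L * s" unfolding s_def L_def by (rule sL_comm)
  have qL: "adj Q * L = L * Q" unfolding Q_def L_def by (rule adjQ_L)
  have qxL: "adj Qx * L = L * Qx" unfolding Qx_def L_def by (rule adjQ_L)
  have as: "adj s = s" unfolding s_def by (rule adj_s)
  show ?thesis
    unfolding V_def
    apply (simp only: d ma_simps ma_dims adj_dims adj_add adj_minus adj_smult adj_mult as sl1 ql1 qxl1 sL qL qxL qs1 qxs1 qs0 qxs0)
    apply (rule ma_entries_eqI)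
      apply (simp_all only: d ma_dims adj_dims)
    apply (simp only: d ma_dims ma_idx adj_dims)
    apply (simp add: algebra_simps power2_eq_square del: index_mult_mat)
    done
qed


lemma alg_x2:
  fixes s L Q Y M Mi D Dc Yx Mx :: "complex mat" and Phi Om Phix Omx :: "complex vec"
  assumes d: "dim_row s = m" "dim_col s = m" "dim_row L = m" "dim_col L = m" "dim_row Q = m" "dim_col Q = m"
     "dim_row Y = m" "dim_col Y = n" "dim_row M = n" "dim_col M = n" "dim_row Mi = n" "dim_col Mi = n"
     "dim_row D = n" "dim_col D = n" "dim_row Dc = n" "dim_col Dc = n" "dim_vec Phi = m" "dim_vec Om = n"
  and sL: "s * L = L * s"
  and R1: "adj Y * L * Y = \<i> \<cdot>\<^sub>m (M * D - Dc * M)"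
  and R2: "adj Y *\<^sub>v (L *\<^sub>v Phi) = \<i> \<cdot>\<^sub>v (lam \<cdot>\<^sub>v Om - Dc *\<^sub>v Om)"
  and MMi: "M * Mi = 1\<^sub>m n" "Mi * M = 1\<^sub>m n"
  and Yx_eq: "Yx = s * Y * (\<i> \<cdot>\<^sub>m D) + (\<i> \<cdot>\<^sub>m Q) * Y"
  and Mx_eq: "Mx = adj Y * (L * s) * Y"
  and Omx_eq: "Omx = adj Y *\<^sub>v ((L * s) *\<^sub>v Phi)"
  and Phix_eq: "Phix = ((\<i>*lam) \<cdot>\<^sub>m s + \<i> \<cdot>\<^sub>m Q) *\<^sub>v Phi"
  and P_eq: "P = Y * Mi * adj Y * L"
  shows "Phix - (Yx *\<^sub>v (Mi *\<^sub>v Om) + Y *\<^sub>v ((- (Mi * Mx * Mi)) *\<^sub>v Om + Mi *\<^sub>v Omx))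
   = ((\<i>*lam) \<cdot>\<^sub>m s + \<i> \<cdot>\<^sub>m (Q - \<i> \<cdot>\<^sub>m (s * P - P * s))) *\<^sub>v (Phi - Y *\<^sub>v (Mi *\<^sub>v Om))"
proof -
  have r1v: "adj Y *\<^sub>v (L *\<^sub>v (Y *\<^sub>v w)) = \<i> \<cdot>\<^sub>v (M *\<^sub>v (D *\<^sub>v w)) + (-\<i>) \<cdot>\<^sub>v (Dc *\<^sub>v (M *\<^sub>v w))" if "dim_vec w = n" for w
  proof -
    have "adj Y *\<^sub>v (L *\<^sub>v (Y *\<^sub>v w)) = (adj Y * L * Y) *\<^sub>v w" using that by (simp add: d mv_simps ma_dims)
    also have "\<dots> = \<i> \<cdot>\<^sub>v (M *\<^sub>v (D *\<^sub>v w)) + (-\<i>) \<cdot>\<^sub>v (Dc *\<^sub>v (M *\<^sub>v w))" unfolding R1 using that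
      by (simp add: d mv_simps ma_simps ma_dims)
    finally show ?thesis .
  qed
  have r2: "adj Y *\<^sub>v (L *\<^sub>v Phi) = (\<i>*lam) \<cdot>\<^sub>v Om + (-\<i>) \<cdot>\<^sub>v (Dc *\<^sub>v Om)"
    unfolding R2 by (simp add: d mv_simps mv_dims)
  have mm: "M *\<^sub>v (Mi *\<^sub>v w) = w" "Mi *\<^sub>v (M *\<^sub>v w) = w" if "dim_vec w = n" for w
    using that by (simp_all add: d mv_simps ma_dims MMi flip: mv_assoc)
  have sl: "s *\<^sub>v (L *\<^sub>v w) = L *\<^sub>v (s *\<^sub>v w)" if "dim_vec w = m" for w
    using that by (simp add: d mv_simps ma_dims sL flip: mv_assoc)
  show ?thesis
    unfolding Yx_eq Mx_eq Omx_eq Phix_eq P_eq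
    apply (simp only: d mv_simps ma_simps ma_dims mv_dims adj_dims r1v r2 mm sl)
    apply (rule mv_entries_eqI)
     apply (simp_all only: d ma_dims mv_dims adj_dims)
    apply (simp only: d ma_dims mv_dims mv_idx adj_dims)
    apply (simp add: algebra_simps del: index_mult_mat index_mult_mat_vec)
    done
qed

lemma alg_QnQn2:
  fixes s L Q Y M Mi D Dc Gx Yx Mx :: "complex mat"
  assumes d: "dim_row s = m" "dim_col s = m" "dim_row L = m" "dim_col L = m" "dim_row Q = m" "dim_col Q = m"
     "dim_row Y = m" "dim_col Y = n" "dim_row M = n" "dim_col M = n" "dim_row Mi = n" "dim_col Mi = n"
     "dim_row D = n" "dim_col D = n" "dim_row Dc = n" "dim_col Dc = n" "dim_row Gx = n" "dim_col Gx = m"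
  and ss: "s * s = 1\<^sub>m m"
  and sL: "s * L = L * s"
  and Qs: "Q * s = - (s * Q)"
  and R1: "adj Y * L * Y = \<i> \<cdot>\<^sub>m (M * D - Dc * M)"
  and MMi: "M * Mi = 1\<^sub>m n" "Mi * M = 1\<^sub>m n"
  and GxL: "Gx * L = (-\<i>) \<cdot>\<^sub>m (Dc * adj Y * L * s) + (-\<i>) \<cdot>\<^sub>m (adj Y * L * Q)"
  and Yx_eq: "Yx = s * Y * (\<i> \<cdot>\<^sub>m D) + (\<i> \<cdot>\<^sub>m Q) * Y"
  and Mx_eq: "Mx = adj Y * (L * s) * Y"
  and P_def: "P = Y * Mi * adj Y * L"
  and Px_def: "Px = ((Yx * Mi + Y * (- (Mi * Mx * Mi))) * adj Y + Y * Mi * Gx) * L"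
  shows "(Q - \<i> \<cdot>\<^sub>m (s * P - P * s)) * (Q - \<i> \<cdot>\<^sub>m (s * P - P * s)) = Q * Q + s * Px + Px * s"
proof -
  have mm1: "M * (Mi * X) = X" "Mi * (M * X) = X" if "dim_row X = n" for X
    using that by (simp_all add: d ma_dims MMi ma_oneL flip: ma_assoc)
  have dmi: "D * (Mi * X) = Mi * (Dc * X) + (-\<i>) \<cdot>\<^sub>m (Mi * (adj Y * (L * (Y * (Mi * X)))))" if "dim_row X = n" for X
  proof -
    have "Mi * (adj Y * L * Y) * Mi * X = \<i> \<cdot>\<^sub>m (Mi * (M * D - Dc * M) * Mi * X)"
      unfolding R1 using that by (simp add: d ma_simps ma_dims)
    also have "\<dots> = \<i> \<cdot>\<^sub>m (D * (Mi * X)) + (-\<i>) \<cdot>\<^sub>m (Mi * (Dc * X))"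
      using that by (simp add: d ma_simps ma_dims mm1)
    finally have e: "Mi * (adj Y * L * Y) * Mi * X = \<i> \<cdot>\<^sub>m (D * (Mi * X)) + (-\<i>) \<cdot>\<^sub>m (Mi * (Dc * X))" .
    have "(-\<i>) \<cdot>\<^sub>m (Mi * (adj Y * L * Y) * Mi * X) = D * (Mi * X) + (-1) \<cdot>\<^sub>m (Mi * (Dc * X))"
      unfolding e using that by (simp add: d ma_simps ma_dims)
    then show ?thesis using that
      apply (simp add: d ma_simps ma_dims)
      apply (rule ma_entries_eqI)
      apply (simp_all only: d ma_dims adj_dims)
      apply (drule_tac f="\<lambda>A. A $$ (i,j)" in arg_cong)
      apply (simp only: d ma_dims ma_idx adj_dims)
      apply (simp add: algebra_simps del: index_mult_mat)
      done
  qed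
  have ss1: "s * (s * X) = X" if "dim_row X = m" for X
    using that by (simp add: d ma_dims ss ma_oneL flip: ma_assoc)
  have qs1: "Q * (s * X) = (-1) \<cdot>\<^sub>m (s * (Q * X))" if "dim_row X = m" for X
    using that by (simp add: d ma_dims Qs ma_simps flip: ma_assoc)
  have qs0: "Q * s = (-1) \<cdot>\<^sub>m (s * Q)" by (simp add: Qs ma_uminus)
  have sl1: "s * (L * X) = L * (s * X)" if "dim_row X = m" for X
    using that by (simp add: d ma_dims sL flip: ma_assoc)
  have gx1: "Gx * (L * X) = (-\<i>) \<cdot>\<^sub>m (Dc * (adj Y * (L * (s * X)))) + (-\<i>) \<cdot>\<^sub>m (adj Y * (L * (Q * X)))" if "dim_row X = m" for X
  proof -
    have "Gx * (L * X) = (Gx * L) * X" using that by (simp add: d ma_dims ma_assoc)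
    then show ?thesis unfolding GxL using that by (simp add: d ma_dims ma_simps)
  qed
  have gx0: "Gx * L = (-\<i>) \<cdot>\<^sub>m (Dc * (adj Y * (L * s))) + (-\<i>) \<cdot>\<^sub>m (adj Y * (L * Q))"
    unfolding GxL by (simp add: d ma_dims ma_simps)
  show ?thesis
    unfolding Px_def P_def Yx_eq Mx_eq
    apply (simp only: d ma_simps ma_dims adj_dims ss1 ss qs1 qs0 sl1 sL gx1 gx0 dmi)
    apply (rule ma_entries_eqI)
      apply (simp_all only: d ma_dims adj_dims)
    apply (simp only: d ma_dims ma_idx adj_dims)
    apply (simp add: algebra_simps del: index_mult_mat)
    done
qed

lemma alg_t2:
  fixes s L Q Qx Y M Mi D Dc Gx Yx Mx Yt Mt :: "complex mat" and Phi Om Phit Omt :: "complex vec"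
  assumes d: "dim_row s = m" "dim_col s = m" "dim_row L = m" "dim_col L = m" "dim_row Q = m" "dim_col Q = m"
     "dim_row Qx = m" "dim_col Qx = m"
     "dim_row Y = m" "dim_col Y = n" "dim_row M = n" "dim_col M = n" "dim_row Mi = n" "dim_col Mi = n"
     "dim_row D = n" "dim_col D = n" "dim_row Dc = n" "dim_col Dc = n" "dim_row Gx = n" "dim_col Gx = m"
     "dim_vec Phi = m" "dim_vec Om = n"
  and ss: "s * s = 1\<^sub>m m"
  and sL: "s * L = L * s"
  and R1: "adj Y * L * Y = \<i> \<cdot>\<^sub>m (M * D - Dc * M)"
  and R2: "adj Y *\<^sub>v (L *\<^sub>v Phi) = \<i> \<cdot>\<^sub>v (lam \<cdot>\<^sub>v Om - Dc *\<^sub>v Om)"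
  and MMi: "M * Mi = 1\<^sub>m n" "Mi * M = 1\<^sub>m n"
  and GxL: "Gx * L = (-\<i>) \<cdot>\<^sub>m (Dc * adj Y * L * s) + (-\<i>) \<cdot>\<^sub>m (adj Y * L * Q)"
  and Yx_eq: "Yx = s * Y * (\<i> \<cdot>\<^sub>m D) + (\<i> \<cdot>\<^sub>m Q) * Y"
  and Mx_eq: "Mx = adj Y * (L * s) * Y"
  and P_def: "P = Y * Mi * adj Y * L"
  and Px_def: "Px = ((Yx * Mi + Y * (- (Mi * Mx * Mi))) * adj Y + Y * Mi * Gx) * L"
  and Qn_def: "Qn = Q - \<i> \<cdot>\<^sub>m (s * P - P * s)"
  and QnQn: "Qn * Qn = Q * Q + s * Px + Px * s"
  and C_def: "C = (1/2) \<cdot>\<^sub>m (\<i> \<cdot>\<^sub>m (s * (Q * Q)) - s * Qx)"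
  and Yt_eq: "Yt = s * Y * (\<i> \<cdot>\<^sub>m (D * D)) + Q * Y * (\<i> \<cdot>\<^sub>m D) - C * Y"
  and Mt_eq: "Mt = adj Y * (L * s) * Y * D + Dc * (adj Y * (L * s) * Y) + adj Y * (L * Q) * Y"
  and Omt_eq: "Omt = lam \<cdot>\<^sub>v (adj Y *\<^sub>v ((L * s) *\<^sub>v Phi)) + Dc *\<^sub>v (adj Y *\<^sub>v ((L * s) *\<^sub>v Phi)) + adj Y *\<^sub>v ((L * Q) *\<^sub>v Phi)"
  and Phit_eq: "Phit = ((\<i> * lam^2) \<cdot>\<^sub>m s + (\<i> * lam) \<cdot>\<^sub>m Q - C) *\<^sub>v Phi"
  shows "Phit - (Yt *\<^sub>v (Mi *\<^sub>v Om) + Y *\<^sub>v ((- (Mi * Mt * Mi)) *\<^sub>v Om + Mi *\<^sub>v Omt))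
   = ((\<i> * lam^2) \<cdot>\<^sub>m s + (\<i> * lam) \<cdot>\<^sub>m Qn
       - (1/2) \<cdot>\<^sub>m (\<i> \<cdot>\<^sub>m (s * (Qn * Qn)) - s * (Qx - \<i> \<cdot>\<^sub>m (s * Px - Px * s)))) *\<^sub>v (Phi - Y *\<^sub>v (Mi *\<^sub>v Om))"
proof -
  have r1v: "adj Y *\<^sub>v (L *\<^sub>v (Y *\<^sub>v w)) = \<i> \<cdot>\<^sub>v (M *\<^sub>v (D *\<^sub>v w)) + (-\<i>) \<cdot>\<^sub>v (Dc *\<^sub>v (M *\<^sub>v w))" if "dim_vec w = n" for w
  proof -
    have "adj Y *\<^sub>v (L *\<^sub>v (Y *\<^sub>v w)) = (adj Y * L * Y) *\<^sub>v w" using that by (simp add: d mv_simps ma_dims)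
    also have "\<dots> = \<i> \<cdot>\<^sub>v (M *\<^sub>v (D *\<^sub>v w)) + (-\<i>) \<cdot>\<^sub>v (Dc *\<^sub>v (M *\<^sub>v w))" unfolding R1 using that
      by (simp add: d mv_simps ma_simps ma_dims)
    finally show ?thesis .
  qed
  have r2: "adj Y *\<^sub>v (L *\<^sub>v Phi) = (\<i>*lam) \<cdot>\<^sub>v Om + (-\<i>) \<cdot>\<^sub>v (Dc *\<^sub>v Om)"
    unfolding R2 by (simp add: d mv_simps mv_dims)
  have mm: "M *\<^sub>v (Mi *\<^sub>v w) = w" "Mi *\<^sub>v (M *\<^sub>v w) = w" if "dim_vec w = n" for w
    using that by (simp_all add: d mv_simps ma_dims MMi flip: mv_assoc)
  have sl: "s *\<^sub>v (L *\<^sub>v w) = L *\<^sub>v (s *\<^sub>v w)" if "dim_vec w = m" for w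
    using that by (simp add: d mv_simps ma_dims sL flip: mv_assoc)
  have ssv: "s *\<^sub>v (s *\<^sub>v w) = w" if "dim_vec w = m" for w
    using that by (simp add: d mv_simps ma_dims ss flip: mv_assoc)
  have gxv: "Gx *\<^sub>v (L *\<^sub>v w) = (-\<i>) \<cdot>\<^sub>v (Dc *\<^sub>v (adj Y *\<^sub>v (L *\<^sub>v (s *\<^sub>v w)))) + (-\<i>) \<cdot>\<^sub>v (adj Y *\<^sub>v (L *\<^sub>v (Q *\<^sub>v w)))" if "dim_vec w = m" for w
  proof -
    have "Gx *\<^sub>v (L *\<^sub>v w) = (Gx * L) *\<^sub>v w" using that by (simp add: d ma_dims mv_assoc)
    then show ?thesis unfolding GxL using that by (simp add: d ma_dims ma_simps mv_simps)
  qed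
  show ?thesis
    unfolding QnQn
    unfolding Px_def Qn_def P_def C_def Yt_eq Mt_eq Omt_eq Phit_eq Yx_eq Mx_eq
    apply (simp only: d ma_simps ma_dims mv_simps mv_dims adj_dims r1v r2 mm sl ssv gxv)
    apply (rule mv_entries_eqI)
     apply (simp_all only: d ma_dims mv_dims adj_dims)
    apply (simp only: d ma_dims mv_dims mv_idx adj_dims)
    apply (simp add: algebra_simps power2_eq_square del: index_mult_mat index_mult_mat_vec)
    done
qed




lemma col_Y: assumes "\<forall>j<n. dim_vec (Ph j) = m" "i < n"
  shows "col (mat_of_cols m (map Ph [0..<n])) i = Ph i"
proof -
  have "Ph i \<in> carrier_vec m" unfolding carrier_vec_def using assms by blast
  then show ?thesis using col_mat_of_cols[of i "map Ph [0..<n]" m] assms(2) by simp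
qed

lemma herm_mat_eq: assumes dP: "\<forall>j<n. dim_vec (Ph j) = m" and dB: "B \<in> carrier_mat m m"
  shows "mat n n (\<lambda>(i,j). herm (Ph i) B (Ph j)) = adj (mat_of_cols m (map Ph [0..<n])) * B * mat_of_cols m (map Ph [0..<n])"
proof (rule eq_matI)
  fix i j assume "i < dim_row (adj (mat_of_cols m (map Ph [0..<n])) * B * mat_of_cols m (map Ph [0..<n]))"
    "j < dim_col (adj (mat_of_cols m (map Ph [0..<n])) * B * mat_of_cols m (map Ph [0..<n]))"
  then have ij: "i < n" "j < n" by auto
  show "mat n n (\<lambda>(i,j). herm (Ph i) B (Ph j)) $$ (i,j) = (adj (mat_of_cols m (map Ph [0..<n])) * B * mat_of_cols m (map Ph [0..<n])) $$ (i,j)"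
    using ij dB by (subst herm_entry[where m=m]) (auto simp: col_Y[OF dP] simp del: index_mult_mat)
qed auto

lemma herm_vec_eq: assumes dP: "\<forall>j<n. dim_vec (Ph j) = m" and dB: "B \<in> carrier_mat m m" and dv: "dim_vec v = m"
  shows "vec n (\<lambda>i. herm (Ph i) B v) = adj (mat_of_cols m (map Ph [0..<n])) *\<^sub>v (B *\<^sub>v v)"
proof (rule eq_vecI)
  fix i assume "i < dim_vec (adj (mat_of_cols m (map Ph [0..<n])) *\<^sub>v (B *\<^sub>v v))"
  then have i: "i < n" by auto
  show "vec n (\<lambda>i. herm (Ph i) B v) $ i = (adj (mat_of_cols m (map Ph [0..<n])) *\<^sub>v (B *\<^sub>v v)) $ i"
    using i dB dv by (subst herm_vec_entry[where m=m]) (auto simp: col_Y[OF dP] simp del: index_mult_mat_vec)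
qed auto

lemma R1_lemma:
  assumes dP: "\<forall>j<n. dim_vec (Ph j) = m" and dL: "L \<in> carrier_mat m m"
  and M0: "M0 = mat n n (\<lambda>(i, j). if i = j \<and> lam i \<in> \<real> then c i
        else herm (Ph i) L (Ph j) / (\<i> * (lam j - cnj (lam i))))"
  and nz: "\<forall>i<n. \<forall>j<n. \<not>(i = j \<and> lam i \<in> \<real>) \<longrightarrow> lam j \<noteq> cnj (lam i)"
  and rn: "\<forall>i<n. lam i \<in> \<real> \<longrightarrow> herm (Ph i) L (Ph i) = 0"
  shows "adj (mat_of_cols m (map Ph [0..<n])) * L * mat_of_cols m (map Ph [0..<n])
     = \<i> \<cdot>\<^sub>m (M0 * Dm n lam - Dm n (\<lambda>i. cnj (lam i)) * M0)"
proof -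
  have "adj (mat_of_cols m (map Ph [0..<n])) * L * mat_of_cols m (map Ph [0..<n]) = mat n n (\<lambda>(i,j). herm (Ph i) L (Ph j))"
    by (rule herm_mat_eq[OF dP dL, symmetric])
  also have "\<dots> = \<i> \<cdot>\<^sub>m (M0 * Dm n lam - Dm n (\<lambda>i. cnj (lam i)) * M0)"
  proof (rule eq_matI)
    fix i j assume "i < dim_row (\<i> \<cdot>\<^sub>m (M0 * Dm n lam - Dm n (\<lambda>i. cnj (lam i)) * M0))"
      "j < dim_col (\<i> \<cdot>\<^sub>m (M0 * Dm n lam - Dm n (\<lambda>i. cnj (lam i)) * M0))"
    then have ij: "i < n" "j < n" using M0 by auto
    have dM: "dim_row M0 = n" "dim_col M0 = n" using M0 by auto
    have e1: "(M0 * Dm n lam) $$ (i,j) = M0 $$ (i,j) * lam j"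
      by (subst diag_right[OF Dm_dims Dm_diag]) (use ij dM in \<open>auto simp: Dm_entry\<close>)
    have e2: "(Dm n (\<lambda>i. cnj (lam i)) * M0) $$ (i,j) = cnj (lam i) * M0 $$ (i,j)"
      by (subst diag_left[OF Dm_dims Dm_diag]) (use ij dM in \<open>auto simp: Dm_entry\<close>)
    have rhs: "(\<i> \<cdot>\<^sub>m (M0 * Dm n lam - Dm n (\<lambda>i. cnj (lam i)) * M0)) $$ (i,j) = \<i> * (lam j - cnj (lam i)) * M0 $$ (i,j)"
      using ij dM e1 e2 by (simp del: index_mult_mat add: ma_dims algebra_simps)
    show "mat n n (\<lambda>(i,j). herm (Ph i) L (Ph j)) $$ (i,j) = (\<i> \<cdot>\<^sub>m (M0 * Dm n lam - Dm n (\<lambda>i. cnj (lam i)) * M0)) $$ (i,j)"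
      unfolding rhs
    proof (cases "i = j \<and> lam i \<in> \<real>")
      case True
      then have "lam j - cnj (lam i) = 0" by (metis Reals_cnj_iff right_minus_eq)
      then show "mat n n (\<lambda>(i,j). herm (Ph i) L (Ph j)) $$ (i,j) = \<i> * (lam j - cnj (lam i)) * M0 $$ (i,j)"
        using True rn ij by auto
    next
      case False
      then have c: "\<i> * (lam j - cnj (lam i)) \<noteq> 0" using nz ij by auto
      show "mat n n (\<lambda>(i,j). herm (Ph i) L (Ph j)) $$ (i,j) = \<i> * (lam j - cnj (lam i)) * M0 $$ (i,j)"
        using False ij c M0 by auto
    qed
  qed (use M0 in auto)
  finally show ?thesis .
qed

lemma R2_lemma:
  assumes dP: "\<forall>j<n. dim_vec (Ph j) = m" and dL: "L \<in> carrier_mat m m" and dv: "dim_vec v = m"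
  and Om0: "Om0 = vec n (\<lambda>i. herm (Ph i) L v / (\<i> * (lamz - cnj (lam i))))"
  and nz: "\<forall>i<n. lamz \<noteq> cnj (lam i)"
  shows "adj (mat_of_cols m (map Ph [0..<n])) *\<^sub>v (L *\<^sub>v v) = \<i> \<cdot>\<^sub>v (lamz \<cdot>\<^sub>v Om0 - Dm n (\<lambda>i. cnj (lam i)) *\<^sub>v Om0)"
proof -
  have "adj (mat_of_cols m (map Ph [0..<n])) *\<^sub>v (L *\<^sub>v v) = vec n (\<lambda>i. herm (Ph i) L v)"
    by (rule herm_vec_eq[OF dP dL dv, symmetric])
  also have "\<dots> = \<i> \<cdot>\<^sub>v (lamz \<cdot>\<^sub>v Om0 - Dm n (\<lambda>i. cnj (lam i)) *\<^sub>v Om0)"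
  proof (rule eq_vecI)
    fix i assume "i < dim_vec (\<i> \<cdot>\<^sub>v (lamz \<cdot>\<^sub>v Om0 - Dm n (\<lambda>i. cnj (lam i)) *\<^sub>v Om0))"
    then have i: "i < n" by auto
    have c: "\<i> * (lamz - cnj (lam i)) \<noteq> 0" using nz i by auto
    have e: "(Dm n (\<lambda>i. cnj (lam i)) *\<^sub>v Om0) $ i = cnj (lam i) * Om0 $ i" using i Om0 by (simp add: Dm_multv del: index_mult_mat_vec)
    have c2: "\<i> * lamz - \<i> * cnj (lam i) \<noteq> 0" using c by (simp add: algebra_simps)
    show "vec n (\<lambda>i. herm (Ph i) L v) $ i = (\<i> \<cdot>\<^sub>v (lamz \<cdot>\<^sub>v Om0 - Dm n (\<lambda>i. cnj (lam i)) *\<^sub>v Om0)) $ i"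
      using i e c2 Om0 by (simp add: field_simps del: index_mult_mat_vec)
  qed (use Om0 in auto)
  finally show ?thesis .
qed


lemma GxL_lemma:
  fixes Y0 :: "complex mat" and N k n :: nat and q :: "real \<Rightarrow> real \<Rightarrow> nat \<Rightarrow> complex" and x t :: real
  assumes dY: "dim_row Y0 = N+1" "dim_col Y0 = n"
  shows "adj (sigma3 N * Y0 * (\<i> \<cdot>\<^sub>m Dm n lam) + (\<i> \<cdot>\<^sub>m Qmat N k q x t) * Y0) * LambdaM N k
    = (-\<i>) \<cdot>\<^sub>m (Dm n (\<lambda>i. cnj (lam i)) * adj Y0 * LambdaM N k * sigma3 N) + (-\<i>) \<cdot>\<^sub>m (adj Y0 * LambdaM N k * Qmat N k q x t)"
proof -
  let ?s = "sigma3 N" and ?L = "LambdaM N k" and ?Q = "Qmat N k q x t"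
  have sL: "?s * ?L = ?L * ?s" by (rule sL_comm)
  have sl1: "?s * (?L * X) = ?L * (?s * X)" if "dim_row X = N+1" for X
    using that by (simp add: ma_dims sL flip: ma_assoc)
  have ql1: "adj ?Q * (?L * X) = ?L * (?Q * X)" if "dim_row X = N+1" for X
    using that by (simp add: ma_dims adjQ_L flip: ma_assoc)
  have qL: "adj ?Q * ?L = ?L * ?Q" by (rule adjQ_L)
  show ?thesis
    apply (simp only: dY s_dims L_dims Q_dims Dm_dims ma_simps ma_dims adj_dims adj_add adj_smult adj_mult adj_s adj_Dm sl1 ql1 sL qL)
    apply (rule ma_entries_eqI)
      apply (simp_all only: dY s_dims L_dims Q_dims Dm_dims ma_dims adj_dims)
    apply (simp only: dY s_dims L_dims Q_dims Dm_dims ma_dims ma_idx adj_dims)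
    apply (simp add: algebra_simps del: index_mult_mat)
    done
qed

lemma herm_ent: assumes dP: "\<forall>j<n. dim_vec (Ph j) = m" and dB: "B \<in> carrier_mat m m" and ij: "i < n" "j < n"
  shows "(adj (mat_of_cols m (map Ph [0..<n])) * B * mat_of_cols m (map Ph [0..<n])) $$ (i,j) = herm (Ph i) B (Ph j)"
  using herm_mat_eq[OF dP dB] ij by (metis (no_types, lifting) case_prod_conv index_mat(1))

lemma Mt_lemma:
  assumes dP: "\<forall>j<n. dim_vec (Ph j) = m" and dB1: "B1 \<in> carrier_mat m m" and dB2: "B2 \<in> carrier_mat m m"
  shows "mat n n (\<lambda>(i,j). herm (Ph i) ((lam j + cnj (lam i)) \<cdot>\<^sub>m B1 + B2) (Ph j))
    = adj (mat_of_cols m (map Ph [0..<n])) * B1 * mat_of_cols m (map Ph [0..<n]) * Dm n lam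
      + Dm n (\<lambda>i. cnj (lam i)) * (adj (mat_of_cols m (map Ph [0..<n])) * B1 * mat_of_cols m (map Ph [0..<n]))
      + adj (mat_of_cols m (map Ph [0..<n])) * B2 * mat_of_cols m (map Ph [0..<n])"
    (is "?l = ?X * Dm n lam + Dm n ?c * ?X + ?Z")
proof (rule eq_matI)
  fix i j assume "i < dim_row (?X * Dm n lam + Dm n ?c * ?X + ?Z)" "j < dim_col (?X * Dm n lam + Dm n ?c * ?X + ?Z)"
  then have ij: "i < n" "j < n" by auto
  have dX: "dim_row ?X = n" "dim_col ?X = n" by auto
  have e1: "(?X * Dm n lam) $$ (i,j) = herm (Ph i) B1 (Ph j) * lam j"
    by (subst diag_right[OF Dm_dims Dm_diag]) (use ij dX herm_ent[OF dP dB1 ij] in \<open>auto simp: Dm_entry simp del: index_mult_mat\<close>)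
  have e2: "(Dm n ?c * ?X) $$ (i,j) = cnj (lam i) * herm (Ph i) B1 (Ph j)"
    by (subst diag_left[OF Dm_dims Dm_diag]) (use ij dX herm_ent[OF dP dB1 ij] in \<open>auto simp: Dm_entry simp del: index_mult_mat\<close>)
  have e3: "?Z $$ (i,j) = herm (Ph i) B2 (Ph j)" by (rule herm_ent[OF dP dB2 ij])
  have l: "?l $$ (i,j) = (lam j + cnj (lam i)) * herm (Ph i) B1 (Ph j) + herm (Ph i) B2 (Ph j)"
    using ij dP dB1 dB2 by (simp add: herm_add herm_smult)
  show "?l $$ (i,j) = (?X * Dm n lam + Dm n ?c * ?X + ?Z) $$ (i,j)"
    unfolding l using ij dX e1 e2 e3 by (simp del: index_mult_mat add: ma_dims algebra_simps)
qed auto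

lemma Omt_lemma:
  assumes dP: "\<forall>j<n. dim_vec (Ph j) = m" and dB1: "B1 \<in> carrier_mat m m" and dB2: "B2 \<in> carrier_mat m m" and dv: "dim_vec v = m"
  shows "vec n (\<lambda>i. herm (Ph i) ((lamz + cnj (lam i)) \<cdot>\<^sub>m B1 + B2) v)
    = lamz \<cdot>\<^sub>v (adj (mat_of_cols m (map Ph [0..<n])) *\<^sub>v (B1 *\<^sub>v v))
      + Dm n (\<lambda>i. cnj (lam i)) *\<^sub>v (adj (mat_of_cols m (map Ph [0..<n])) *\<^sub>v (B1 *\<^sub>v v))
      + adj (mat_of_cols m (map Ph [0..<n])) *\<^sub>v (B2 *\<^sub>v v)"
    (is "?l = lamz \<cdot>\<^sub>v ?X + Dm n ?c *\<^sub>v ?X + ?Z")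
proof (rule eq_vecI)
  fix i assume "i < dim_vec (lamz \<cdot>\<^sub>v ?X + Dm n ?c *\<^sub>v ?X + ?Z)"
  then have i: "i < n" by auto
  have hX: "?X $ i = herm (Ph i) B1 v" using herm_vec_eq[OF dP dB1 dv] i by (metis index_vec)
  have hZ: "?Z $ i = herm (Ph i) B2 v" using herm_vec_eq[OF dP dB2 dv] i by (metis index_vec)
  have e2: "(Dm n ?c *\<^sub>v ?X) $ i = cnj (lam i) * herm (Ph i) B1 v" using i hX by (simp add: Dm_multv del: index_mult_mat_vec)
  have l: "?l $ i = (lamz + cnj (lam i)) * herm (Ph i) B1 v + herm (Ph i) B2 v"
    using i dP dB1 dB2 dv by (simp add: herm_add herm_smult)
  show "?l $ i = (lamz \<cdot>\<^sub>v ?X + Dm n ?c *\<^sub>v ?X + ?Z) $ i"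
    unfolding l using i hX hZ e2 by (simp del: index_mult_mat_vec add: algebra_simps)
qed auto




theorem mainTheorem3:
  fixes N k n :: nat
    and q :: "real \<Rightarrow> real \<Rightarrow> nat \<Rightarrow> complex"
    and lam :: "nat \<Rightarrow> complex"
    and Phis :: "nat \<Rightarrow> real \<Rightarrow> real \<Rightarrow> complex vec"
    and lambda :: complex
    and Phi :: "real \<Rightarrow> real \<Rightarrow> complex vec"
    and Md :: "nat \<Rightarrow> real \<Rightarrow> real \<Rightarrow> real"
    and M :: "real \<Rightarrow> real \<Rightarrow> complex mat"
    and Y :: "real \<Rightarrow> real \<Rightarrow> complex mat"
    and Om :: "real \<Rightarrow> real \<Rightarrow> complex vec"
    and Phin :: "real \<Rightarrow> real \<Rightarrow> complex vec"
    and Qn :: "real \<Rightarrow> real \<Rightarrow> complex mat"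
  assumes "N \<ge> 1" and "k \<le> N"
    and q_smooth: "\<forall>l < N. smooth2 (\<lambda>x t. q x t l)"
    and "n \<ge> 1"
    and sols: "\<forall>j < n. lax_solution N k q (lam j) (Phis j)"
    and distinct: "\<forall>i < n. \<forall>j < n. i \<noteq> j \<longrightarrow> lam j \<noteq> cnj (lam i)"
    and sol: "lax_solution N k q lambda Phi"
    and lambda_ne: "\<forall>i < n. lambda \<noteq> cnj (lam i)"
    and real_null: "\<forall>i < n. lam i \<in> \<real> \<longrightarrow> (\<forall>x t. herm (Phis i x t) (LambdaM N k) (Phis i x t) = 0)"
    and real_smooth: "\<forall>i < n. lam i \<in> \<real> \<longrightarrow> smooth2 (\<lambda>x t. complex_of_real (Md i x t))"
    and real_dM: "\<forall>i < n. lam i \<in> \<real> \<longrightarrow> (\<forall>x t.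
        ((\<lambda>y. complex_of_real (Md i y t)) has_vector_derivative
            omega_x N k (Phis i x t) (Phis i x t)) (at x) \<and>
        ((\<lambda>s. complex_of_real (Md i x s)) has_vector_derivative
            omega_t N k (Qmat N k q x t) (lam i) (lam i) (Phis i x t) (Phis i x t)) (at t))"
    and M_def: "\<forall>x t. M x t = mat n n (\<lambda>(i, j).
        if i = j \<and> lam i \<in> \<real> then complex_of_real (Md i x t)
        else herm (Phis i x t) (LambdaM N k) (Phis j x t) / (\<i> * (lam j - cnj (lam i))))"
    and M_inv: "\<forall>x t. invertible_mat (M x t)"
    and Y_def: "\<forall>x t. Y x t = mat_of_cols (N+1) (map (\<lambda>j. Phis j x t) [0..<n])"
    and Om_def: "\<forall>x t. Om x t = vec n (\<lambda>i.
        herm (Phis i x t) (LambdaM N k) (Phi x t) / (\<i> * (lambda - cnj (lam i))))"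
    and Phin_def: "\<forall>x t. Phin x t = Phi x t - Y x t *\<^sub>v (minv (M x t) *\<^sub>v Om x t)"
    and Qn_def: "\<forall>x t. Qn x t = Qmat N k q x t - \<i> \<cdot>\<^sub>m
        (sigma3 N * (Y x t * minv (M x t) * adj (Y x t) * LambdaM N k)
         - (Y x t * minv (M x t) * adj (Y x t) * LambdaM N k) * sigma3 N)"
  shows "\<forall>x t. mdiff_x Qn x t
      \<and> vhas_dx Phin (Ux N lambda Qn x t *\<^sub>v Phin x t) x t
      \<and> vhas_dt Phin (Vt N lambda Qn x t *\<^sub>v Phin x t) x t"
proof (intro allI)
  fix x t
  let ?s = "sigma3 N" and ?L = "LambdaM N k" and ?Q = "Qmat N k q x t" and ?Qx = "Qmat N k (dq q) x t"
  let ?D = "Dm n lam" and ?Dc = "Dm n (\<lambda>i. cnj (lam i))"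
  let ?Y0 = "Y x t" and ?M0 = "M x t" and ?Mi = "minv (M x t)" and ?Om0 = "Om x t" and ?Phi0 = "Phi x t"
  let ?G = "adj (Y x t)"
  have dPhis: "dim_vec (Phis j y s) = N+1" if "j < n" for j y s using sols that by (auto simp: lax_solution_def)
  have dPhis': "\<forall>j<n. dim_vec (Phis j y s) = N+1" for y s using dPhis by auto
  have dPhi: "dim_vec (Phi y s) = N+1" for y s using sol by (auto simp: lax_solution_def)
  have dY: "dim_row (Y y s) = N+1" "dim_col (Y y s) = n" for y s using Y_def by auto
  have dM: "M y s \<in> carrier_mat n n" for y s using M_def by auto
  have dMr: "dim_row (M y s) = n" "dim_col (M y s) = n" for y s using dM by auto
  have invM: "invertible_mat (M y s)" for y s using M_inv by auto
  have dOm: "dim_vec (Om y s) = n" for y s using Om_def by auto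
  have ip: "minv (M y s) * M y s = 1\<^sub>m n" "M y s * minv (M y s) = 1\<^sub>m n" "minv (M y s) \<in> carrier_mat n n" for y s
    using inv_props[OF dM invM] by auto
  have dMi: "dim_row (minv (M y s)) = n" "dim_col (minv (M y s)) = n" for y s using ip(3) by auto
  have qd: "(\<lambda>z. q z s l) differentiable (at y)" if "l < N" for l y s
  proof -
    have "smooth2 (\<lambda>x t. q x t l)" using q_smooth that by auto
    then have "(\<lambda>z. pd [] (\<lambda>x t. q x t l) z s) differentiable (at y)" unfolding smooth2_def by blast
    then show ?thesis by simp
  qed
  have Qder: "mder (\<lambda>y. Qmat N k q y t) ?Qx x" by (rule Q_der) (use qd in auto)
  have mdxQ: "mdx (Qmat N k q) x t = ?Qx" by (rule mder_mdx(1)[where F="Qmat N k q", OF Qder])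
  have Ux_eq: "Ux N c (Qmat N k q) x t = (\<i>*c) \<cdot>\<^sub>m ?s + \<i> \<cdot>\<^sub>m ?Q" for c by (simp add: Ux_def)
  have Vt_eq: "Vt N c (Qmat N k q) x t = (\<i>*c^2) \<cdot>\<^sub>m ?s + (\<i>*c) \<cdot>\<^sub>m ?Q - (1/2) \<cdot>\<^sub>m (\<i> \<cdot>\<^sub>m (?s * (?Q * ?Q)) - ?s * ?Qx)" for c
    by (simp add: Vt_def mdxQ)
  have PdX: "\<forall>j<n. vder (\<lambda>y. Phis j y t) (Ux N (lam j) (Qmat N k q) x t *\<^sub>v Phis j x t) x"
    using sols by (auto simp: lax_solution_def intro: vhas_dx_vder)
  have PdT: "\<forall>j<n. vder (\<lambda>s. Phis j x s) (Vt N (lam j) (Qmat N k q) x t *\<^sub>v Phis j x t) t"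
    using sols by (auto simp: lax_solution_def intro: vhas_dt_vder)
  have PhiX: "vder (\<lambda>y. Phi y t) (Ux N lambda (Qmat N k q) x t *\<^sub>v Phi x t) x"
    using sol by (auto simp: lax_solution_def intro: vhas_dx_vder)
  have PhiT: "vder (\<lambda>s. Phi x s) (Vt N lambda (Qmat N k q) x t *\<^sub>v Phi x t) t"
    using sol by (auto simp: lax_solution_def intro: vhas_dt_vder)
  have dL: "?L \<in> carrier_mat (N+1) (N+1)" and ds: "?s \<in> carrier_mat (N+1) (N+1)" and dQ: "?Q \<in> carrier_mat (N+1) (N+1)"
    and dQx: "?Qx \<in> carrier_mat (N+1) (N+1)" by auto
  have dUx: "Ux N c (Qmat N k q) x t \<in> carrier_mat (N+1) (N+1)" for c by (rule carrier_matI) (simp_all add: Ux_eq)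
  have dUxd: "dim_row (Ux N c (Qmat N k q) x t) = N+1" "dim_col (Ux N c (Qmat N k q) x t) = N+1" for c
    using dUx[of c] by auto
  have dVt: "Vt N c (Qmat N k q) x t \<in> carrier_mat (N+1) (N+1)" for c by (rule carrier_matI) (simp_all add: Vt_eq)
  have Y0_eq: "?Y0 = mat_of_cols (N+1) (map (\<lambda>j. Phis j x t) [0..<n])" using Y_def by auto
  have M0_eq: "?M0 = mat n n (\<lambda>(i, j). if i = j \<and> lam i \<in> \<real> then complex_of_real (Md i x t)
        else herm (Phis i x t) ?L (Phis j x t) / (\<i> * (lam j - cnj (lam i))))" using M_def by auto
  have Om0_eq: "?Om0 = vec n (\<lambda>i. herm (Phis i x t) ?L (Phi x t) / (\<i> * (lambda - cnj (lam i))))" using Om_def by auto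
  have nzM: "\<forall>i<n. \<forall>j<n. \<not>(i = j \<and> lam i \<in> \<real>) \<longrightarrow> lam j \<noteq> cnj (lam i)"
    using distinct by (metis Reals_cnj_iff)
  have rn: "\<forall>i<n. lam i \<in> \<real> \<longrightarrow> herm (Phis i x t) ?L (Phis i x t) = 0" using real_null by auto
  have R1: "?G * ?L * ?Y0 = \<i> \<cdot>\<^sub>m (?M0 * ?D - ?Dc * ?M0)"
    unfolding Y0_eq by (rule R1_lemma[where c="\<lambda>i. complex_of_real (Md i x t)", OF dPhis' dL M0_eq nzM rn])
  have R2: "?G *\<^sub>v (?L *\<^sub>v ?Phi0) = \<i> \<cdot>\<^sub>v (lambda \<cdot>\<^sub>v ?Om0 - ?Dc *\<^sub>v ?Om0)"
    unfolding Y0_eq by (rule R2_lemma[OF dPhis' dL dPhi Om0_eq lambda_ne])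
  define Yx where "Yx = mat_of_cols (N+1) (map (\<lambda>j. Ux N (lam j) (Qmat N k q) x t *\<^sub>v Phis j x t) [0..<n])"
  have YderX: "mder (\<lambda>y. Y y t) Yx x"
  proof -
    have "(\<lambda>y. Y y t) = (\<lambda>y. mat_of_cols (N+1) (map (\<lambda>j. Phis j y t) [0..<n]))" using Y_def by auto
    moreover have "mder (\<lambda>y. mat_of_cols (N+1) (map (\<lambda>j. Phis j y t) [0..<n])) Yx x"
      unfolding Yx_def by (rule Y_der) (use PdX dPhis dUx dUxd in auto)
    ultimately show ?thesis by simp
  qed
  have Yx_eq: "Yx = ?s * ?Y0 * (\<i> \<cdot>\<^sub>m ?D) + (\<i> \<cdot>\<^sub>m ?Q) * ?Y0"
  proof -
    have "Yx = mat_of_cols (N+1) (map (\<lambda>j. ((\<i> * lam j) \<cdot>\<^sub>m ?s + \<i> \<cdot>\<^sub>m ?Q) *\<^sub>v Phis j x t) [0..<n])"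
      unfolding Yx_def Ux_eq ..
    also have "\<dots> = ?s * mat_of_cols (N+1) (map (\<lambda>j. Phis j x t) [0..<n]) * Dm n (\<lambda>j. \<i> * lam j)
        + (\<i> \<cdot>\<^sub>m ?Q) * mat_of_cols (N+1) (map (\<lambda>j. Phis j x t) [0..<n])"
      by (rule cols_lin2) (use dPhis in auto)
    also have "Dm n (\<lambda>j. \<i> * lam j) = \<i> \<cdot>\<^sub>m ?D" by (simp add: Dm_smult)
    finally show ?thesis using Y0_eq by simp
  qed
  have AidX: "\<forall>i<n. \<forall>j<n. adj (Ux N (lam i) (Qmat N k q) x t) * ?L + ?L * Ux N (lam j) (Qmat N k q) x t
      = (\<i> * (lam j - cnj (lam i))) \<cdot>\<^sub>m (?L * ?s)"
    unfolding Ux_eq using Aid_x by blast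
  have MderX': "mder (\<lambda>y. M y t) (mat n n (\<lambda>(i,j). herm (Phis i x t) (?L * ?s) (Phis j x t))) x"
  proof (rule M_der[where Ps="\<lambda>j y. Phis j y t" and A="\<lambda>j. Ux N (lam j) (Qmat N k q) x t" and m="N+1"
        and W="\<lambda>i j. ?L * ?s" and lam=lam and Md="\<lambda>i y. Md i y t"])
    show "\<forall>i<n. lam i \<in> \<real> \<longrightarrow> ((\<lambda>y. complex_of_real (Md i y t)) has_vector_derivative herm (Phis i x t) (?L * ?s) (Phis i x t)) (at x)"
      using real_dM by (simp add: omega_x_def)
  qed (use PdX dUx dPhis M_def nzM AidX in auto)
  have Mx_eq: "mat n n (\<lambda>(i,j). herm (Phis i x t) (?L * ?s) (Phis j x t)) = ?G * (?L * ?s) * ?Y0"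
    unfolding Y0_eq by (rule herm_mat_eq) (use dPhis in auto)
  define Mx where "Mx = ?G * (?L * ?s) * ?Y0"
  have MderX: "mder (\<lambda>y. M y t) Mx x" using MderX' Mx_eq unfolding Mx_def by simp
  have AidX0: "\<forall>i<n. adj (Ux N (lam i) (Qmat N k q) x t) * ?L + ?L * Ux N lambda (Qmat N k q) x t
      = (\<i> * (lambda - cnj (lam i))) \<cdot>\<^sub>m (?L * ?s)"
    unfolding Ux_eq using Aid_x by blast
  have OmderX': "vder (\<lambda>y. Om y t) (vec n (\<lambda>i. herm (Phis i x t) (?L * ?s) (Phi x t))) x"
    by (rule Om_der[where Ps="\<lambda>j y. Phis j y t" and A="\<lambda>j. Ux N (lam j) (Qmat N k q) x t" and m="N+1"
        and Pf="\<lambda>y. Phi y t" and Az="Ux N lambda (Qmat N k q) x t" and W="\<lambda>i. ?L * ?s" and lam=lam and lamz=lambda])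
      (use PdX dUx dPhis PhiX dPhi Om_def lambda_ne AidX0 in auto)
  define Omx where "Omx = ?G *\<^sub>v ((?L * ?s) *\<^sub>v ?Phi0)"
  have OmderX: "vder (\<lambda>y. Om y t) Omx x"
  proof -
    have "vec n (\<lambda>i. herm (Phis i x t) (?L * ?s) (Phi x t)) = Omx"
      unfolding Omx_def Y0_eq by (rule herm_vec_eq) (use dPhis dPhi in auto)
    then show ?thesis using OmderX' by simp
  qed
  have MiderX: "mder (\<lambda>y. minv (M y t)) (- (?Mi * Mx * ?Mi)) x"
    by (rule mder_minv[OF MderX]) (use dM invM in auto)
  have dYx: "dim_row Yx = N+1" "dim_col Yx = n" unfolding Yx_def by auto
  have dMx: "dim_row Mx = n" "dim_col Mx = n" unfolding Mx_def using dY by auto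
  define Mix where "Mix = - (?Mi * Mx * ?Mi)"
  have dMix: "dim_row Mix = n" "dim_col Mix = n" unfolding Mix_def using dMi dMx by auto
  define Px where "Px = ((Yx * ?Mi + ?Y0 * Mix) * ?G + ?Y0 * ?Mi * adj Yx) * ?L"
  have PderX: "mder (\<lambda>y. Y y t * minv (M y t) * adj (Y y t) * ?L) Px x"
  proof -
    have a: "mder (\<lambda>y. Y y t * minv (M y t)) (Yx * ?Mi + ?Y0 * Mix) x"
      using mder_mult[OF YderX MiderX[folded Mix_def]] dYx dMix by auto
    have b: "mder (\<lambda>y. adj (Y y t)) (adj Yx) x" by (rule mder_adj[OF YderX])
    have c: "mder (\<lambda>y. Y y t * minv (M y t) * adj (Y y t)) ((Yx * ?Mi + ?Y0 * Mix) * ?G + ?Y0 * ?Mi * adj Yx) x"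
      using mder_mult[OF a b] dYx dMix by auto
    show ?thesis unfolding Px_def by (rule mder_multC[OF c]) (use dYx in auto)
  qed
  have dPx: "dim_row Px = N+1" "dim_col Px = N+1" unfolding Px_def using dYx dY by auto
  define Qnx where "Qnx = ?Qx - \<i> \<cdot>\<^sub>m (?s * Px - Px * ?s)"
  have QnderX: "mder (\<lambda>y. Qn y t) Qnx x"
  proof -
    let ?P = "\<lambda>y. Y y t * minv (M y t) * adj (Y y t) * ?L"
    have e: "(\<lambda>y. Qn y t) = (\<lambda>y. Qmat N k q y t - \<i> \<cdot>\<^sub>m (?s * ?P y - ?P y * ?s))" using Qn_def by auto
    have a: "mder (\<lambda>y. ?s * ?P y) (?s * Px) x" by (rule mder_Cmult[OF PderX]) (use dPx in auto)
    have b: "mder (\<lambda>y. ?P y * ?s) (Px * ?s) x" by (rule mder_multC[OF PderX]) (use dPx in auto)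
    have c: "mder (\<lambda>y. ?s * ?P y - ?P y * ?s) (?s * Px - Px * ?s) x" by (rule mder_diff[OF a b]) (use dPx in auto)
    have d: "mder (\<lambda>y. \<i> \<cdot>\<^sub>m (?s * ?P y - ?P y * ?s)) (\<i> \<cdot>\<^sub>m (?s * Px - Px * ?s)) x" by (rule mder_smult[OF c])
    show ?thesis unfolding e Qnx_def by (rule mder_diff[OF Qder d]) (use dPx in auto)
  qed
  have mdxQn: "mdx Qn x t = Qnx" and mdiffQn: "mdiff_x Qn x t"
    using mder_mdx[where F=Qn, OF QnderX] by auto
  have PhinderX: "vder (\<lambda>y. Phin y t) (Ux N lambda (Qmat N k q) x t *\<^sub>v ?Phi0 - (Yx *\<^sub>v (?Mi *\<^sub>v ?Om0) + ?Y0 *\<^sub>v (Mix *\<^sub>v ?Om0 + ?Mi *\<^sub>v Omx))) x"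
  proof -
    have e: "(\<lambda>y. Phin y t) = (\<lambda>y. Phi y t - Y y t *\<^sub>v (minv (M y t) *\<^sub>v Om y t))" using Phin_def by auto
    have dOmx: "dim_vec Omx = n" unfolding Omx_def using dY by simp
    have a: "vder (\<lambda>y. minv (M y t) *\<^sub>v Om y t) (Mix *\<^sub>v ?Om0 + ?Mi *\<^sub>v Omx) x"
      by (rule mder_multv[OF MiderX[folded Mix_def] OmderX]) (use dMix dOmx dMi dOm in auto)
    have b: "vder (\<lambda>y. Y y t *\<^sub>v (minv (M y t) *\<^sub>v Om y t)) (Yx *\<^sub>v (?Mi *\<^sub>v ?Om0) + ?Y0 *\<^sub>v (Mix *\<^sub>v ?Om0 + ?Mi *\<^sub>v Omx)) x"
      by (rule mder_multv[OF YderX a]) (use dYx dMix dMi dY in auto)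
    show ?thesis unfolding e by (rule vder_diff[OF PhiX b]) (use dYx dUxd dY dPhi in auto)
  qed
  have eqX: "Ux N lambda (Qmat N k q) x t *\<^sub>v ?Phi0 - (Yx *\<^sub>v (?Mi *\<^sub>v ?Om0) + ?Y0 *\<^sub>v (Mix *\<^sub>v ?Om0 + ?Mi *\<^sub>v Omx))
     = Ux N lambda Qn x t *\<^sub>v Phin x t"
  proof -
    have U: "Ux N lambda Qn x t = (\<i>*lambda) \<cdot>\<^sub>m ?s + \<i> \<cdot>\<^sub>m (?Q - \<i> \<cdot>\<^sub>m (?s * (?Y0 * ?Mi * ?G * ?L) - (?Y0 * ?Mi * ?G * ?L) * ?s))"
      using Qn_def by (simp add: Ux_def)
    have Pn: "Phin x t = ?Phi0 - ?Y0 *\<^sub>v (?Mi *\<^sub>v ?Om0)" using Phin_def by auto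
    show ?thesis unfolding Mix_def U Pn
      by (rule alg_x2[where m="N+1" and n=n and M="?M0" and D="?D" and Dc="?Dc" and lam=lambda])
        (use dY dMr dMi dPhi dOm sL_comm R1 R2 ip Yx_eq Mx_def Omx_def Ux_eq in auto)
  qed
  define C0 where "C0 = (1/2) \<cdot>\<^sub>m (\<i> \<cdot>\<^sub>m (?s * (?Q * ?Q)) - ?s * ?Qx)"
  have dC0: "C0 \<in> carrier_mat (N+1) (N+1)" unfolding C0_def by (rule carrier_matI) simp_all
  have Vt_eq2: "Vt N c (Qmat N k q) x t = (\<i>*c^2) \<cdot>\<^sub>m ?s + (\<i>*c) \<cdot>\<^sub>m ?Q - C0" for c
    unfolding Vt_eq C0_def ..
  have dVtd: "dim_row (Vt N c (Qmat N k q) x t) = N+1" "dim_col (Vt N c (Qmat N k q) x t) = N+1" for c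
    using dVt[of c] by auto
  define Yt where "Yt = mat_of_cols (N+1) (map (\<lambda>j. Vt N (lam j) (Qmat N k q) x t *\<^sub>v Phis j x t) [0..<n])"
  have YderT: "mder (\<lambda>s. Y x s) Yt t"
  proof -
    have "(\<lambda>s. Y x s) = (\<lambda>s. mat_of_cols (N+1) (map (\<lambda>j. Phis j x s) [0..<n]))" using Y_def by auto
    moreover have "mder (\<lambda>s. mat_of_cols (N+1) (map (\<lambda>j. Phis j x s) [0..<n])) Yt t"
      unfolding Yt_def by (rule Y_der) (use PdT dPhis dVt dVtd in auto)
    ultimately show ?thesis by simp
  qed
  have Yt_eq: "Yt = ?s * ?Y0 * (\<i> \<cdot>\<^sub>m (?D * ?D)) + ?Q * ?Y0 * (\<i> \<cdot>\<^sub>m ?D) - C0 * ?Y0"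
  proof -
    have "Yt = mat_of_cols (N+1) (map (\<lambda>j. ((\<i> * lam j^2) \<cdot>\<^sub>m ?s + (\<i> * lam j) \<cdot>\<^sub>m ?Q - C0) *\<^sub>v Phis j x t) [0..<n])"
      unfolding Yt_def Vt_eq2 ..
    also have "\<dots> = ?s * mat_of_cols (N+1) (map (\<lambda>j. Phis j x t) [0..<n]) * Dm n (\<lambda>j. \<i> * lam j^2)
        + ?Q * mat_of_cols (N+1) (map (\<lambda>j. Phis j x t) [0..<n]) * Dm n (\<lambda>j. \<i> * lam j)
        - C0 * mat_of_cols (N+1) (map (\<lambda>j. Phis j x t) [0..<n])"
      by (rule cols_lin3) (use dPhis dC0 in auto)
    also have "Dm n (\<lambda>j. \<i> * lam j^2) = \<i> \<cdot>\<^sub>m (?D * ?D)" by (simp add: Dm_smult Dm_mult power2_eq_square)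
    also have "Dm n (\<lambda>j. \<i> * lam j) = \<i> \<cdot>\<^sub>m ?D" by (simp add: Dm_smult)
    finally show ?thesis using Y0_eq by simp
  qed
  have AidT: "\<forall>i<n. \<forall>j<n. adj (Vt N (lam i) (Qmat N k q) x t) * ?L + ?L * Vt N (lam j) (Qmat N k q) x t
      = (\<i> * (lam j - cnj (lam i))) \<cdot>\<^sub>m ((lam j + cnj (lam i)) \<cdot>\<^sub>m (?L * ?s) + ?L * ?Q)"
    unfolding Vt_eq using Aid_t by blast
  have AidT0: "\<forall>i<n. adj (Vt N (lam i) (Qmat N k q) x t) * ?L + ?L * Vt N lambda (Qmat N k q) x t
      = (\<i> * (lambda - cnj (lam i))) \<cdot>\<^sub>m ((lambda + cnj (lam i)) \<cdot>\<^sub>m (?L * ?s) + ?L * ?Q)"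
    unfolding Vt_eq using Aid_t by blast
  have dW: "(c \<cdot>\<^sub>m (?L * ?s) + ?L * ?Q) \<in> carrier_mat (N+1) (N+1)" for c by (rule carrier_matI) simp_all
  have MderT': "mder (\<lambda>s. M x s) (mat n n (\<lambda>(i,j). herm (Phis i x t) ((lam j + cnj (lam i)) \<cdot>\<^sub>m (?L * ?s) + ?L * ?Q) (Phis j x t))) t"
  proof (rule M_der[where Ps="\<lambda>j s. Phis j x s" and A="\<lambda>j. Vt N (lam j) (Qmat N k q) x t" and m="N+1"
        and W="\<lambda>i j. (lam j + cnj (lam i)) \<cdot>\<^sub>m (?L * ?s) + ?L * ?Q" and lam=lam and Md="\<lambda>i s. Md i x s"])
    show "\<forall>i<n. lam i \<in> \<real> \<longrightarrow> ((\<lambda>s. complex_of_real (Md i x s)) has_vector_derivative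
        herm (Phis i x t) ((lam i + cnj (lam i)) \<cdot>\<^sub>m (?L * ?s) + ?L * ?Q) (Phis i x t)) (at t)"
    proof (intro allI impI)
      fix i assume i: "i < n" and r: "lam i \<in> \<real>"
      have "herm (Phis i x t) ((lam i + cnj (lam i)) \<cdot>\<^sub>m (?L * ?s) + ?L * ?Q) (Phis i x t)
          = omega_t N k ?Q (lam i) (lam i) (Phis i x t) (Phis i x t)"
        unfolding omega_t_def using dPhis[OF i] by (simp add: herm_add herm_smult)
      then show "((\<lambda>s. complex_of_real (Md i x s)) has_vector_derivative
        herm (Phis i x t) ((lam i + cnj (lam i)) \<cdot>\<^sub>m (?L * ?s) + ?L * ?Q) (Phis i x t)) (at t)"
        using real_dM i r by auto
    qed
  qed (use PdT dVt dPhis M_def nzM AidT dW in auto)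
  define Mt where "Mt = ?G * (?L * ?s) * ?Y0 * ?D + ?Dc * (?G * (?L * ?s) * ?Y0) + ?G * (?L * ?Q) * ?Y0"
  have MderT: "mder (\<lambda>s. M x s) Mt t"
  proof -
    have "mat n n (\<lambda>(i,j). herm (Phis i x t) ((lam j + cnj (lam i)) \<cdot>\<^sub>m (?L * ?s) + ?L * ?Q) (Phis j x t)) = Mt"
      unfolding Mt_def Y0_eq by (rule Mt_lemma) (use dPhis in auto)
    then show ?thesis using MderT' by simp
  qed
  have OmderT': "vder (\<lambda>s. Om x s) (vec n (\<lambda>i. herm (Phis i x t) ((lambda + cnj (lam i)) \<cdot>\<^sub>m (?L * ?s) + ?L * ?Q) (Phi x t))) t"
    by (rule Om_der[where Ps="\<lambda>j s. Phis j x s" and A="\<lambda>j. Vt N (lam j) (Qmat N k q) x t" and m="N+1"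
        and Pf="\<lambda>s. Phi x s" and Az="Vt N lambda (Qmat N k q) x t" and W="\<lambda>i. (lambda + cnj (lam i)) \<cdot>\<^sub>m (?L * ?s) + ?L * ?Q"
        and lam=lam and lamz=lambda])
      (use PdT dVt dPhis PhiT dPhi Om_def lambda_ne AidT0 dW in auto)
  define Omt where "Omt = lambda \<cdot>\<^sub>v (?G *\<^sub>v ((?L * ?s) *\<^sub>v ?Phi0)) + ?Dc *\<^sub>v (?G *\<^sub>v ((?L * ?s) *\<^sub>v ?Phi0)) + ?G *\<^sub>v ((?L * ?Q) *\<^sub>v ?Phi0)"
  have OmderT: "vder (\<lambda>s. Om x s) Omt t"
  proof -
    have "vec n (\<lambda>i. herm (Phis i x t) ((lambda + cnj (lam i)) \<cdot>\<^sub>m (?L * ?s) + ?L * ?Q) (Phi x t)) = Omt"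
      unfolding Omt_def Y0_eq by (rule Omt_lemma) (use dPhis dPhi in auto)
    then show ?thesis using OmderT' by simp
  qed
  have MiderT: "mder (\<lambda>s. minv (M x s)) (- (?Mi * Mt * ?Mi)) t"
    by (rule mder_minv[OF MderT]) (use dM invM in auto)
  define Mit where "Mit = - (?Mi * Mt * ?Mi)"
  have dMt: "dim_row Mt = n" "dim_col Mt = n" unfolding Mt_def using dY by auto
  have dMit: "dim_row Mit = n" "dim_col Mit = n" unfolding Mit_def using dMi dMt by auto
  have dYt: "dim_row Yt = N+1" "dim_col Yt = n" unfolding Yt_def by auto
  have PhinderT: "vder (\<lambda>s. Phin x s) (Vt N lambda (Qmat N k q) x t *\<^sub>v ?Phi0 - (Yt *\<^sub>v (?Mi *\<^sub>v ?Om0) + ?Y0 *\<^sub>v (Mit *\<^sub>v ?Om0 + ?Mi *\<^sub>v Omt))) t"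
  proof -
    have e: "(\<lambda>s. Phin x s) = (\<lambda>s. Phi x s - Y x s *\<^sub>v (minv (M x s) *\<^sub>v Om x s))" using Phin_def by auto
    have dOmt: "dim_vec Omt = n" unfolding Omt_def using dY by simp
    have a: "vder (\<lambda>s. minv (M x s) *\<^sub>v Om x s) (Mit *\<^sub>v ?Om0 + ?Mi *\<^sub>v Omt) t"
      by (rule mder_multv[OF MiderT[folded Mit_def] OmderT]) (use dMit dOmt dMi dOm in auto)
    have b: "vder (\<lambda>s. Y x s *\<^sub>v (minv (M x s) *\<^sub>v Om x s)) (Yt *\<^sub>v (?Mi *\<^sub>v ?Om0) + ?Y0 *\<^sub>v (Mit *\<^sub>v ?Om0 + ?Mi *\<^sub>v Omt)) t"
      by (rule mder_multv[OF YderT a]) (use dYt dMit dMi dY in auto)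
    show ?thesis unfolding e by (rule vder_diff[OF PhiT b]) (use dYt dVtd dY dPhi in auto)
  qed
  have dd: "dim_row ?s = N+1" "dim_col ?s = N+1" "dim_row ?L = N+1" "dim_col ?L = N+1" "dim_row ?Q = N+1" "dim_col ?Q = N+1"
     "dim_row ?Y0 = N+1" "dim_col ?Y0 = n" "dim_row ?M0 = n" "dim_col ?M0 = n" "dim_row ?Mi = n" "dim_col ?Mi = n"
     "dim_row ?D = n" "dim_col ?D = n" "dim_row ?Dc = n" "dim_col ?Dc = n" "dim_row (adj Yx) = n" "dim_col (adj Yx) = N+1"
     "dim_vec ?Phi0 = N+1" "dim_vec ?Om0 = n"
    using dY dMr dMi dYx dPhi dOm by simp_all
  have dd2: "dim_row ?Qx = N+1" "dim_col ?Qx = N+1" by simp_all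
  have GxL: "adj Yx * ?L = (-\<i>) \<cdot>\<^sub>m (?Dc * ?G * ?L * ?s) + (-\<i>) \<cdot>\<^sub>m (?G * ?L * ?Q)"
    unfolding Yx_eq by (rule GxL_lemma) (use dY in auto)
  have QnQn: "Qn x t * Qn x t = ?Q * ?Q + ?s * Px + Px * ?s"
  proof -
    have U: "Qn x t = ?Q - \<i> \<cdot>\<^sub>m (?s * (?Y0 * ?Mi * ?G * ?L) - (?Y0 * ?Mi * ?G * ?L) * ?s)" using Qn_def by auto
    show ?thesis unfolding U
      by (rule alg_QnQn2[OF dd(1-18) ss_one sL_comm Qs_anti R1 ip(2,1) GxL Yx_eq Mx_def refl Px_def[unfolded Mix_def]])
  qed
  have eqT: "Vt N lambda (Qmat N k q) x t *\<^sub>v ?Phi0 - (Yt *\<^sub>v (?Mi *\<^sub>v ?Om0) + ?Y0 *\<^sub>v (Mit *\<^sub>v ?Om0 + ?Mi *\<^sub>v Omt))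
     = Vt N lambda Qn x t *\<^sub>v Phin x t"
  proof -
    have U: "Vt N lambda Qn x t = (\<i> * lambda^2) \<cdot>\<^sub>m ?s + (\<i> * lambda) \<cdot>\<^sub>m Qn x t
       - (1/2) \<cdot>\<^sub>m (\<i> \<cdot>\<^sub>m (?s * (Qn x t * Qn x t)) - ?s * (?Qx - \<i> \<cdot>\<^sub>m (?s * Px - Px * ?s)))"
      unfolding Vt_def mdxQn Qnx_def ..
    have Pn: "Phin x t = ?Phi0 - ?Y0 *\<^sub>v (?Mi *\<^sub>v ?Om0)" using Phin_def by auto
    have Qd: "Qn x t = ?Q - \<i> \<cdot>\<^sub>m (?s * (?Y0 * ?Mi * ?G * ?L) - (?Y0 * ?Mi * ?G * ?L) * ?s)" using Qn_def by auto
    have Phit: "Vt N lambda (Qmat N k q) x t *\<^sub>v ?Phi0 = ((\<i> * lambda^2) \<cdot>\<^sub>m ?s + (\<i> * lambda) \<cdot>\<^sub>m ?Q - C0) *\<^sub>v ?Phi0"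
      by (simp only: Vt_eq2)
    show ?thesis unfolding Mit_def U Pn
      by (rule alg_t2[OF dd(1-6) dd2 dd(7-20) ss_one sL_comm R1 R2 ip(2,1) GxL Yx_eq Mx_def refl Px_def[unfolded Mix_def] Qd QnQn C0_def Yt_eq Mt_def Omt_def Phit])
  qed
  show "mdiff_x Qn x t \<and> vhas_dx Phin (Ux N lambda Qn x t *\<^sub>v Phin x t) x t
      \<and> vhas_dt Phin (Vt N lambda Qn x t *\<^sub>v Phin x t) x t"
    using mdiffQn vder_vhas_dx[where F=Phin, OF PhinderX[unfolded eqX]] vder_vhas_dt[where F=Phin, OF PhinderT[unfolded eqT]] by auto
qed


end
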